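(* Let $Y$ be a real Banach space. Then for every $\varepsilon>0$: if $f\in\mathrm{Lip}_{0\mathcal K}(\mathbb R,Y)$ with $\|f\|=1$ and $t_1<t_2$ in $\mathbb R$ satisfy $\frac{\|f(t_1)-f(t_2)\|}{|t_1-t_2|}>1-\varepsilon$, then there exist $g\in\mathrm{Lip}_{0\mathcal K}(\mathbb R,Y)$ with $\|g\|=1$ and $t_0\in[t_1,t_2]$ such that $g$ is differentiable at $t_0$ with $\|g'(t_0)\|=1$ and $\|f-g\|<\varepsilon$.
   Context: $\mathrm{Lip}_0(\mathbb R,Y)$ is the Banach space of Lipschitz maps $f\colon\mathbb R\to Y$ with $f(0)=0$, with norm $\|f\|=\sup_{s\neq t}\|f(s)-f(t)\|/|s-t|$; $\mathrm{Lip}_{0\mathcal K}(\mathbb R,Y)$ is the subspace of those $f$ whose set of slopes $\{\frac{f(s)-f(t)}{s-t}:s\neq t\}$ is relatively compact in $Y$. *)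

theory Defs
  imports "HOL-Analysis.Analysis"
begin

definition slopes :: "(real \<Rightarrow> 'a::real_normed_vector) \<Rightarrow> 'a set" where
  "slopes f = {(f s - f t) /\<^sub>R (s - t) | s t. s \<noteq> t}"

definition Lip0 :: "(real \<Rightarrow> 'a::real_normed_vector) set" where
  "Lip0 = {f. (\<exists>L. L\<ge>0 \<and> lipschitz_on L UNIV f) \<and> f 0 = 0}"

definition lip_norm :: "(real \<Rightarrow> 'a::real_normed_vector) \<Rightarrow> real" where
  "lip_norm f = (SUP p \<in> {(s,t). s \<noteq> t}. norm (f (fst p) - f (snd p)) / \<bar>fst p - snd p\<bar>)"

definition Lip0K :: "(real \<Rightarrow> 'a::real_normed_vector) set" where
  "Lip0K = {f \<in> Lip0. compact (closure (slopes f))}"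

end

theory Submission
  imports Defs
begin

definition stp :: "nat \<Rightarrow> (int \<Rightarrow> 'a) \<Rightarrow> real \<Rightarrow> 'a" where
  "stp n h x = h \<lfloor>2^n * x\<rfloor>"

lemma floor_level:
  assumes "n \<le> m"
  shows "\<lfloor>(2::real)^n * x\<rfloor> = \<lfloor>(2::real)^m * x\<rfloor> div 2^(m-n)"
proof -
  have e: "(2::real)^m = 2^n * 2^(m-n)"
    using assms by (simp flip: power_add)
  have "(2::real)^m * x / real_of_int (2^(m-n)) = 2^n * x"
    by (simp only: e of_int_power of_int_numeral) simp
  then show ?thesis
    using floor_divide_real_eq_div[of "2^(m-n)" "2^m * x"] by simp
qed

lemma stp_piece:
  "(stp n h has_integral ((1/2^n) *\<^sub>R h k)) {real_of_int k / 2^n .. real_of_int (k+1) / 2^n}"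
proof -
  have c: "Henstock_Kurzweil_Integration.content {real_of_int k / 2^n .. real_of_int (k+1) / 2^n} = 1/2^n"
    by (simp add: field_simps)
  have hc: "((\<lambda>x. h k) has_integral ((1/2^n) *\<^sub>R h k)) {real_of_int k / 2^n .. real_of_int (k+1) / 2^n}"
    using has_integral_const_real[of "h k" "real_of_int k / 2^n" "real_of_int (k+1) / 2^n"] c by simp
  have hs: "stp n h x = h k" if "x \<in> {real_of_int k / 2^n .. real_of_int (k+1) / 2^n} - {real_of_int (k+1) / 2^n}" for x
  proof -
    from that have "real_of_int k \<le> 2^n * x" "2^n * x < real_of_int k + 1"
      by (auto simp: field_simps)
    then have "\<lfloor>2^n * x\<rfloor> = k" by linarith
    then show ?thesis by (simp add: stp_def)
  qed
  show ?thesis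
    by (rule has_integral_spike[OF negligible_sing hs hc])
qed

lemma stp_grid:
  fixes h :: "int \<Rightarrow> 'a::banach"
  assumes "k \<le> l"
  shows "(stp n h has_integral (\<Sum>i\<in>{k..<l}. (1/2^n) *\<^sub>R h i)) {real_of_int k / 2^n .. real_of_int l / 2^n}"
  using assms
proof (induction l rule: int_ge_induct)
  case base
  show ?case using has_integral_refl(2)[of "stp n h" "real_of_int k / 2^n"] by simp
next
  case (step i)
  have "(stp n h has_integral (\<Sum>i\<in>{k..<i}. (1/2^n) *\<^sub>R h i) + (1/2^n) *\<^sub>R h i) {real_of_int k / 2^n .. real_of_int (i+1) / 2^n}"
  proof -
    have a: "real_of_int k / 2^n \<le> real_of_int i / 2^n" using step.hyps by (simp add: divide_right_mono)
    have b: "real_of_int i / 2^n \<le> real_of_int (i+1) / 2^n" by (simp add: divide_right_mono)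
    show ?thesis using has_integral_combine[OF a b step.IH stp_piece[of n h i]] .
  qed
  moreover have "{k..<i+1} = insert i {k..<i}" using step.hyps by auto
  ultimately show ?case by (simp add: add.commute)
qed

lemma stp_integrable: "stp n (h::int \<Rightarrow> 'a::banach) integrable_on {a..b}"
proof -
  define k where "k = \<lfloor>2^n * a\<rfloor>"
  define l where "l = max k \<lceil>2^n * b\<rceil>"
  have "stp n h integrable_on {real_of_int k / 2^n .. real_of_int l / 2^n}"
    using stp_grid[of k l n h] by (auto simp: l_def)
  moreover have "{a..b} \<subseteq> {real_of_int k / 2^n .. real_of_int l / 2^n}"
  proof
    fix x assume "x \<in> {a..b}"
    then have "a \<le> x" "x \<le> b" by auto
    have "real_of_int k \<le> 2^n * a" unfolding k_def by linarith
    also have "\<dots> \<le> 2^n * x" using \<open>a \<le> x\<close> by simp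
    finally have 1: "real_of_int k / 2^n \<le> x" by (simp add: field_simps)
    have "2^n * x \<le> 2^n * b" using \<open>x \<le> b\<close> by simp
    also have "\<dots> \<le> real_of_int l" unfolding l_def by linarith
    finally have 2: "x \<le> real_of_int l / 2^n" by (simp add: field_simps)
    show "x \<in> {real_of_int k / 2^n .. real_of_int l / 2^n}" using 1 2 by auto
  qed
  ultimately show ?thesis by (rule integrable_on_subinterval)
qed

lemma integral_norm_le_const:
  fixes g :: "real \<Rightarrow> 'a::real_normed_vector"
  assumes "g integrable_on {s..t}" "s \<le> t" "\<And>x. x \<in> {s..t} \<Longrightarrow> norm (g x) \<le> B" "0 \<le> B"
  shows "norm (integral {s..t} g) \<le> B * (t - s)"
  using has_integral_bound[of B g "integral {s..t} g" s t] assms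
  by (simp add: integrable_integral)

definition dq :: "(real \<Rightarrow> 'a::real_normed_vector) \<Rightarrow> nat \<Rightarrow> int \<Rightarrow> 'a" where
  "dq f n k = (2^n) *\<^sub>R (f (real_of_int (k+1) / 2^n) - f (real_of_int k / 2^n))"

lemma dq_telescope:
  assumes "k \<le> l"
  shows "(\<Sum>i\<in>{k..<l}. (1/2^n) *\<^sub>R dq f n i) = f (real_of_int l / 2^n) - f (real_of_int k / 2^n)"
  using assms
proof (induction l rule: int_ge_induct)
  case base
  then show ?case by simp
next
  case (step i)
  have "{k..<i+1} = insert i {k..<i}" using step.hyps by auto
  then show ?case using step.IH by (simp add: dq_def)
qed

lemma dq_slopes: "dq f n k \<in> slopes f"
proof -
  have "dq f n k = (f (real_of_int (k+1) / 2^n) - f (real_of_int k / 2^n)) /\<^sub>R (real_of_int (k+1) / 2^n - real_of_int k / 2^n)"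
    by (simp add: dq_def field_simps)
  moreover have "real_of_int (k+1) / 2^n \<noteq> real_of_int k / 2^n" by (simp add: field_simps)
  ultimately show ?thesis unfolding slopes_def by blast
qed

lemma sum_reindex_blocks:
  fixes h :: "int \<Rightarrow> 'b::comm_monoid_add"
  assumes "a \<le> b" "P > 0"
  shows "(\<Sum>i\<in>{a * int P..<b * int P}. h i) = (\<Sum>k\<in>{a..<b}. \<Sum>r<P. h (k * int P + int r))"
  using assms(1)
proof (induction b rule: int_ge_induct)
  case base
  then show ?case by simp
next
  case (step b)
  have u: "{a * int P..<(b+1) * int P} = {a * int P..<b * int P} \<union> {b * int P..<b * int P + int P}"
  proof -
    have 1: "a * int P \<le> b * int P" using step.hyps by (simp add: mult_right_mono)
    have 2: "(b+1) * int P = b * int P + int P" by (simp add: algebra_simps)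
    show ?thesis unfolding 2 using ivl_disj_un_two(3)[OF 1, of "b * int P + int P"] by simp
  qed
  have d: "{a * int P..<b * int P} \<inter> {b * int P..<b * int P + int P} = {}" by auto
  have im: "{b * int P..<b * int P + int P} = (\<lambda>r. b * int P + int r) ` {..<P}"
  proof (intro set_eqI iffI)
    fix x assume "x \<in> {b * int P..<b * int P + int P}"
    then have "x = b * int P + int (nat (x - b * int P))" "nat (x - b * int P) < P" by auto
    then show "x \<in> (\<lambda>r. b * int P + int r) ` {..<P}" by blast
  qed auto
  have inj: "inj_on (\<lambda>r. b * int P + int r) {..<P}" by (auto simp: inj_on_def)
  have "(\<Sum>i\<in>{a * int P..<(b+1) * int P}. h i) = (\<Sum>i\<in>{a * int P..<b * int P}. h i) + (\<Sum>i\<in>{b * int P..<b * int P + int P}. h i)"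
    unfolding u by (rule sum.union_disjoint) (use d in auto)
  also have "(\<Sum>i\<in>{b * int P..<b * int P + int P}. h i) = (\<Sum>r<P. h (b * int P + int r))"
    unfolding im by (subst sum.reindex[OF inj]) simp
  moreover have "{a..<b+1} = insert b {a..<b}" using step.hyps by auto
  ultimately show ?case using step.IH step.hyps
    by (simp add: u add.commute)
qed

lemma dq_avg:
  "(1/2^n) *\<^sub>R dq f n k = (\<Sum>r<(2::nat)^p. (1/2^(n+p)) *\<^sub>R dq f (n+p) (k * 2^p + int r))"
proof -
  have "(\<Sum>r<(2::nat)^p. (1/2^(n+p)) *\<^sub>R dq f (n+p) (k * 2^p + int r))
      = (\<Sum>i\<in>{k * int (2^p)..<(k+1) * int (2^p)}. (1/2^(n+p)) *\<^sub>R dq f (n+p) i)"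
    using sum_reindex_blocks[of k "k+1" "2^p" "\<lambda>i. (1/2^(n+p)) *\<^sub>R dq f (n+p) i"] by (simp add: atLeastLessThanPlusOne_atLeastAtMost_int)
  also have "\<dots> = f (real_of_int ((k+1) * int (2^p)) / 2^(n+p)) - f (real_of_int (k * int (2^p)) / 2^(n+p))"
    by (rule dq_telescope) simp
  also have "real_of_int ((k+1) * int (2^p)) / 2^(n+p) = real_of_int (k+1) / 2^n"
    by (simp add: power_add)
  also have "real_of_int (k * int (2^p)) / 2^(n+p) = real_of_int k / 2^n"
    by (simp add: power_add)
  finally show ?thesis by (simp add: dq_def)
qed

context
  fixes f :: "real \<Rightarrow> 'a::banach"
  assumes L: "\<And>s t. norm (f s - f t) \<le> \<bar>s - t\<bar>"
begin

lemma dq_norm: "norm (dq f n k) \<le> 1"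
proof -
  have "norm (f (real_of_int (k+1) / 2^n) - f (real_of_int k / 2^n)) \<le> 1/2^n"
    using L[of "real_of_int (k+1) / 2^n" "real_of_int k / 2^n"] by (simp add: field_simps)
  moreover have "norm (dq f n k) = 2^n * norm (f (real_of_int (k+1) / 2^n) - f (real_of_int k / 2^n))"
    by (simp only: dq_def norm_scaleR power_abs abs_numeral)
  ultimately show ?thesis by (simp add: field_simps)
qed

lemma stp_dq_norm: "norm (stp n (dq f n) x) \<le> 1"
  by (simp add: stp_def dq_norm)

lemma stp_dq_integral:
  assumes "s \<le> t"
  shows "norm (integral {s..t} (stp n (dq f n)) - (f t - f s)) \<le> 4 / 2^n"
proof -
  define k where "k = \<lceil>2^n * s\<rceil>"
  define l where "l = \<lfloor>2^n * t\<rfloor>"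
  have I: "stp n (dq f n) integrable_on {a..b}" for a b by (rule stp_integrable)
  have B: "norm (integral {a..b} (stp n (dq f n))) \<le> b - a" if "a \<le> b" for a b
    using integral_norm_le_const[OF I that, of 1] stp_dq_norm by simp
  show ?thesis
  proof (cases "k \<le> l")
    case True
    define p where "p = real_of_int k / 2^n"
    define q where "q = real_of_int l / 2^n"
    have sp: "s \<le> p" "p < s + 1/2^n" unfolding p_def k_def
      by (simp_all add: field_simps) linarith+
    have qt: "q \<le> t" "t < q + 1/2^n" unfolding q_def l_def
      by (simp_all add: field_simps) linarith+
    have pq: "p \<le> q" unfolding p_def q_def using True by (simp add: divide_right_mono)
    have "integral {s..t} (stp n (dq f n)) = integral {s..p} (stp n (dq f n)) + integral {p..t} (stp n (dq f n))"
      using Henstock_Kurzweil_Integration.integral_combine[OF sp(1), of t "stp n (dq f n)"] pq qt I by simp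
    also have "integral {p..t} (stp n (dq f n)) = integral {p..q} (stp n (dq f n)) + integral {q..t} (stp n (dq f n))"
      using Henstock_Kurzweil_Integration.integral_combine[OF pq qt(1) I] by simp
    also have "integral {p..q} (stp n (dq f n)) = f q - f p"
      unfolding p_def q_def using integral_unique[OF stp_grid[OF True, of n "dq f n"]] dq_telescope[OF True] by simp
    finally have eq: "integral {s..t} (stp n (dq f n)) - (f t - f s) =
        integral {s..p} (stp n (dq f n)) + integral {q..t} (stp n (dq f n)) - (f t - f q) - (f p - f s)"
      by (simp add: algebra_simps)
    have "norm (integral {s..t} (stp n (dq f n)) - (f t - f s)) \<le>
        norm (integral {s..p} (stp n (dq f n))) + norm (integral {q..t} (stp n (dq f n))) + norm (f t - f q) + norm (f p - f s)"
      unfolding eq by (smt (verit) norm_diff_ineq norm_triangle_ineq4 norm_triangle_ineq)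
    also have "\<dots> \<le> (p - s) + (t - q) + (t - q) + (p - s)"
      using B[OF sp(1)] B[OF qt(1)] L[of t q] L[of p s] sp qt by auto
    also have "\<dots> \<le> 4/2^n" using sp qt by simp
    finally show ?thesis .
  next
    case False
    have "2^n * t - 2^n * s < 1" using False unfolding k_def l_def by linarith
    then have ts: "t - s < 1/2^n" by (simp add: field_simps)
    have "norm (integral {s..t} (stp n (dq f n)) - (f t - f s)) \<le> norm (integral {s..t} (stp n (dq f n))) + norm (f t - f s)"
      by (rule norm_triangle_ineq4)
    also have "\<dots> \<le> (t - s) + (t - s)" using B[OF assms] L[of t s] assms by auto
    also have "\<dots> \<le> 4/2^n" using ts by (simp add: field_simps)
    finally show ?thesis .
  qed
qed

end

lemma card_sym_int: "card {- (int R * 2^n)..<int R * 2^n} = 2 * R * 2^n"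
  by (simp add: nat_mult_distrib nat_power_eq)

lemma div_block: "r < 2^p \<Longrightarrow> (k * 2^p + int r) div 2^p = (k::int)"
  by (simp add: div_add1_eq)

context
  fixes f :: "real \<Rightarrow> 'a::banach" and R :: nat
  assumes L: "\<And>s t. norm (f s - f t) \<le> \<bar>s - t\<bar>"
    and Rpos: "R > 0"
begin

definition Phi :: "nat \<Rightarrow> 'a \<Rightarrow> real" where
  "Phi n c = (\<Sum>k\<in>{- (int R * 2^n)..<int R * 2^n}. (1/2^n) * norm (dq f n k - c))"

definition Dl :: "nat \<Rightarrow> nat \<Rightarrow> real" where
  "Dl n p = (\<Sum>i\<in>{- (int R * 2^(n+p))..<int R * 2^(n+p)}. (1/2^(n+p)) * norm (dq f (n+p) i - dq f n (i div 2^p)))"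

lemma w_sum: "(\<Sum>r<(2::nat)^p. (1/2^(n+p)::real)) = 1/2^n"
  by (simp add: power_add)

lemma gap_k:
  "(1/2^n) * norm (dq f n k - c) \<le> (\<Sum>r<(2::nat)^p. (1/2^(n+p)) * norm (dq f (n+p) (k*2^p + int r) - c))"
proof -
  have "(1/2^n) *\<^sub>R (dq f n k - c) = (\<Sum>r<(2::nat)^p. (1/2^(n+p)) *\<^sub>R (dq f (n+p) (k*2^p + int r) - c))"
  proof -
    have "(\<Sum>r<(2::nat)^p. (1/2^(n+p)) *\<^sub>R c) = (\<Sum>r<(2::nat)^p. (1/2^(n+p)::real)) *\<^sub>R c"
      by (simp only: scaleR_sum_left)
    also have "\<dots> = (1/2^n) *\<^sub>R c" by (simp only: w_sum)
    finally have "(\<Sum>r<(2::nat)^p. (1/2^(n+p)) *\<^sub>R c) = (1/2^n) *\<^sub>R c" .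
    then show ?thesis
      by (simp add: scaleR_diff_right sum_subtractf dq_avg[of n f k p])
  qed
  then have "(1/2^n) * norm (dq f n k - c) = norm (\<Sum>r<(2::nat)^p. (1/2^(n+p)) *\<^sub>R (dq f (n+p) (k*2^p + int r) - c))"
    by (metis abs_of_nonneg norm_scaleR zero_le_divide_1_iff zero_le_numeral zero_le_power)
  also have "\<dots> \<le> (\<Sum>r<(2::nat)^p. norm ((1/2^(n+p)) *\<^sub>R (dq f (n+p) (k*2^p + int r) - c)))"
    by (rule norm_sum)
  also have "\<dots> = (\<Sum>r<(2::nat)^p. (1/2^(n+p)) * norm (dq f (n+p) (k*2^p + int r) - c))"
    by simp
  finally show ?thesis .
qed

lemma sym_blocks: "{- (int R * 2^(n+p))..<int R * 2^(n+p)} = {(- (int R * 2^n)) * int (2^p)..<(int R * 2^n) * int (2^p)}"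
  by (simp add: power_add algebra_simps)

lemma Phi_split:
  "Phi (n+p) c = (\<Sum>k\<in>{- (int R * 2^n)..<int R * 2^n}. \<Sum>r<(2::nat)^p. (1/2^(n+p)) * norm (dq f (n+p) (k*2^p + int r) - c))"
  unfolding Phi_def sym_blocks
  by (subst sum_reindex_blocks) auto

lemma Phi_mono: "Phi n c \<le> Phi (n+p) c"
  unfolding Phi_split by (unfold Phi_def, rule sum_mono, rule gap_k)

lemma Phi_bound: "Phi n c \<le> 2 * R * (1 + norm c)"
proof -
  have "Phi n c \<le> (\<Sum>k\<in>{- (int R * 2^n)..<int R * 2^n}. (1/2^n) * (1 + norm c))"
    unfolding Phi_def
  proof (rule sum_mono)
    fix k
    have "norm (dq f n k - c) \<le> 1 + norm c"
      using dq_norm[OF L, of n k] norm_triangle_ineq4[of "dq f n k" c] by linarith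
    then show "(1/2^n) * norm (dq f n k - c) \<le> (1/2^n) * (1 + norm c)"
      by (simp add: divide_right_mono)
  qed
  also have "\<dots> = 2 * R * (1 + norm c)"
    by (simp add: card_sym_int)
  finally show ?thesis .
qed

lemma Dl_split:
  "Dl n p = (\<Sum>k\<in>{- (int R * 2^n)..<int R * 2^n}. \<Sum>r<(2::nat)^p. (1/2^(n+p)) * norm (dq f (n+p) (k*2^p + int r) - dq f n k))"
  unfolding Dl_def sym_blocks
  by (subst sum_reindex_blocks) (auto simp: div_block)

lemma Dl_bound:
  fixes \<eta> :: real
  assumes C: "finite C" and net: "\<And>k. \<exists>c\<in>C. norm (dq f n k - c) \<le> \<eta>"
  shows "Dl n p \<le> (\<Sum>c\<in>C. Phi (n+p) c - Phi n c) + 4 * R * \<eta>"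
proof -
  define gap where "gap k c = (\<Sum>r<(2::nat)^p. (1/2^(n+p)) * norm (dq f (n+p) (k*2^p + int r) - c)) - (1/2^n) * norm (dq f n k - c)" for k c
  have gap_nn: "gap k c \<ge> 0" for k c unfolding gap_def using gap_k[of n k c p] by simp
  have perk: "(\<Sum>r<(2::nat)^p. (1/2^(n+p)) * norm (dq f (n+p) (k*2^p + int r) - dq f n k))
       \<le> (\<Sum>c\<in>C. gap k c) + 2 * \<eta> / 2^n" for k
  proof -
    obtain c where c: "c \<in> C" "norm (dq f n k - c) \<le> \<eta>" using net by blast
    have "(\<Sum>r<(2::nat)^p. (1/2^(n+p)) * norm (dq f (n+p) (k*2^p + int r) - dq f n k))
        \<le> (\<Sum>r<(2::nat)^p. (1/2^(n+p)) * (norm (dq f (n+p) (k*2^p + int r) - c) + norm (dq f n k - c)))"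
    proof (rule sum_mono)
      fix r
      have "norm (dq f (n+p) (k*2^p + int r) - dq f n k) \<le> norm (dq f (n+p) (k*2^p + int r) - c) + norm (dq f n k - c)"
        using norm_diff_triangle_ineq[of "dq f (n+p) (k*2^p + int r)" c c "dq f n k"]
        by (simp add: norm_minus_commute)
      then show "(1/2^(n+p)) * norm (dq f (n+p) (k*2^p + int r) - dq f n k) \<le> (1/2^(n+p)) * (norm (dq f (n+p) (k*2^p + int r) - c) + norm (dq f n k - c))"
        by (simp add: divide_right_mono)
    qed
    also have "\<dots> = (\<Sum>r<(2::nat)^p. (1/2^(n+p)) * norm (dq f (n+p) (k*2^p + int r) - c)) + (\<Sum>r<(2::nat)^p. (1/2^(n+p)::real)) * norm (dq f n k - c)"
      by (simp add: distrib_left sum.distrib sum_distrib_right)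
    also have "\<dots> = gap k c + 2 * ((1/2^n) * norm (dq f n k - c))"
      unfolding w_sum gap_def by simp
    also have "\<dots> \<le> (\<Sum>c\<in>C. gap k c) + 2 * \<eta> / 2^n"
    proof -
      have "gap k c \<le> (\<Sum>c\<in>C. gap k c)" by (rule member_le_sum[OF c(1) _ C]) (use gap_nn in auto)
      moreover have "(1/2^n) * norm (dq f n k - c) \<le> \<eta> / 2^n" using c(2) by (simp add: divide_right_mono)
      ultimately show ?thesis by simp
    qed
    finally show ?thesis .
  qed
  have "Dl n p \<le> (\<Sum>k\<in>{- (int R * 2^n)..<int R * 2^n}. (\<Sum>c\<in>C. gap k c) + 2 * \<eta> / 2^n)"
    unfolding Dl_split by (rule sum_mono) (rule perk)
  also have "\<dots> = (\<Sum>c\<in>C. \<Sum>k\<in>{- (int R * 2^n)..<int R * 2^n}. gap k c) + 4 * R * \<eta>"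
    by (simp add: sum.distrib card_sym_int sum.swap[of gap])
  also have "(\<Sum>c\<in>C. \<Sum>k\<in>{- (int R * 2^n)..<int R * 2^n}. gap k c) = (\<Sum>c\<in>C. Phi (n+p) c - Phi n c)"
    unfolding gap_def Phi_split by (simp add: sum_subtractf Phi_def)
  finally show ?thesis .
qed

lemma Dl_cauchy:
  assumes Kc: "compact (closure (slopes f))" and eta: "\<eta> > 0"
  shows "\<exists>N. \<forall>n\<ge>N. \<forall>p. Dl n p \<le> \<eta>"
proof -
  define e where "e = \<eta> / (8 * R)"
  have e0: "e > 0" using eta Rpos by (simp add: e_def)
  obtain C where C: "finite C" "closure (slopes f) \<subseteq> (\<Union>c\<in>C. ball c e)"
    using Kc e0 unfolding compact_eq_totally_bounded by metis
  have net: "\<exists>c\<in>C. norm (dq f n k - c) \<le> e" for n k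
  proof -
    have "dq f n k \<in> closure (slopes f)" using dq_slopes closure_subset by blast
    then obtain c where "c \<in> C" "dist c (dq f n k) < e" using C(2) by auto
    then show ?thesis by (auto simp: dist_norm norm_minus_commute intro!: bexI[of _ c])
  qed
  define \<Psi> where "\<Psi> n = (\<Sum>c\<in>C. Phi n c)" for n
  have inc: "incseq \<Psi>"
  proof (rule incseq_SucI)
    fix n show "\<Psi> n \<le> \<Psi> (Suc n)"
      unfolding \<Psi>_def using Phi_mono[of n _ 1] by (simp add: sum_mono)
  qed
  have bdd: "bdd_above (range \<Psi>)"
  proof
    fix y assume "y \<in> range \<Psi>"
    then obtain n where "y = \<Psi> n" by auto
    then show "y \<le> (\<Sum>c\<in>C. 2 * R * (1 + norm c))"
      unfolding \<Psi>_def using Phi_bound by (simp add: sum_mono)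
  qed
  have "Cauchy \<Psi>"
    using LIMSEQ_incseq_SUP[OF bdd inc] by (rule LIMSEQ_imp_Cauchy)
  then obtain N where N: "\<And>m n. m \<ge> N \<Longrightarrow> n \<ge> N \<Longrightarrow> dist (\<Psi> m) (\<Psi> n) < \<eta>/2"
    using eta by (meson CauchyD half_gt_zero metric_CauchyD)
  show ?thesis
  proof (intro exI allI impI)
    fix n p assume "n \<ge> N"
    have "Dl n p \<le> (\<Sum>c\<in>C. Phi (n+p) c - Phi n c) + 4 * R * e"
      by (rule Dl_bound[OF C(1) net])
    also have "(\<Sum>c\<in>C. Phi (n+p) c - Phi n c) = \<Psi> (n+p) - \<Psi> n"
      unfolding \<Psi>_def by (simp add: sum_subtractf)
    also have "\<dots> < \<eta>/2"
    proof -
      have "dist (\<Psi> (n+p)) (\<Psi> n) < \<eta>/2" using N[of "n+p" n] \<open>n \<ge> N\<close> by simp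
      then show ?thesis unfolding dist_real_def by linarith
    qed
    also have "4 * R * e = \<eta>/2" using Rpos by (simp add: e_def)
    finally show "Dl n p \<le> \<eta>" by simp
  qed
qed

end

lemma ball_real_eq: "ball (x::real) r = {x - r<..<x+r}" by (auto simp: dist_real_def)

lemma measure_ball_real: "r > 0 \<Longrightarrow> measure lebesgue (ball (x::real) r) = 2 * r"
  by (simp add: ball_real_eq)

lemma geom_quarter: "(\<Sum>i\<le>n. (1/4::real)^(i+j)) \<le> 2 * (1/4)^j"
proof -
  have "(\<Sum>i\<le>n. (1/4::real)^(i+j)) = (1/4)^j * (\<Sum>i\<le>n. (1/4::real)^i)"
    by (simp add: power_add sum_distrib_left mult.commute)
  also have "(\<Sum>i\<le>n. (1/4::real)^i) = (1 - (1/4)^Suc n) / (1 - 1/4)"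
    by (subst sum_gp0) simp
  also have "\<dots> \<le> 2" by (simp add: field_simps)
  finally show ?thesis by (simp add: mult_left_mono)
qed

lemma cauchy_geometric:
  fixes a :: "nat \<Rightarrow> 'a::banach"
  assumes "\<And>k. k \<ge> j \<Longrightarrow> norm (a (Suc k) - a k) \<le> (1/2)^k"
  shows "convergent a"
proof -
  have "summable (\<lambda>k. norm (a (Suc k) - a k))"
    by (rule summable_comparison_test'[of "\<lambda>k. (1/2::real)^k" j]) (use assms in auto)
  then have s: "summable (\<lambda>k. a (Suc k) - a k)" by (rule summable_norm_cancel)
  have "(\<lambda>n. a 0 + (\<Sum>k<n. a (Suc k) - a k)) \<longlonglongrightarrow> a 0 + suminf (\<lambda>k. a (Suc k) - a k)"
    by (intro tendsto_add tendsto_const summable_LIMSEQ[OF s])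
  then have "a \<longlonglongrightarrow> a 0 + suminf (\<lambda>k. a (Suc k) - a k)"
    by (simp add: sum_lessThan_telescope)
  then show ?thesis by (auto simp: convergent_def)
qed

lemma subseq_exists:
  fixes f :: "real \<Rightarrow> 'a::banach"
  assumes L: "\<And>s t. norm (f s - f t) \<le> \<bar>s - t\<bar>" and Rpos: "R > 0"
    and Kc: "compact (closure (slopes f))"
  shows "\<exists>ns. strict_mono ns \<and> (\<forall>k p. Dl f R (ns k) p \<le> (1/8)^k)"
proof -
  have "\<forall>k. \<exists>N. \<forall>n\<ge>N. \<forall>p. Dl f R n p \<le> (1/8)^k"
    using Dl_cauchy[OF L Rpos Kc] by simp
  then obtain Nf where Nf: "\<And>k n p. n \<ge> Nf k \<Longrightarrow> Dl f R n p \<le> (1/8)^k" by metis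
  define ns where "ns k = (\<Sum>j\<le>k. Nf j) + k" for k
  have "strict_mono ns" unfolding strict_mono_Suc_iff ns_def by simp
  moreover have "ns k \<ge> Nf k" for k
    unfolding ns_def using member_le_sum[of k "{..k}" Nf] by simp
  ultimately show ?thesis using Nf by blast
qed

locale approx =
  fixes f :: "real \<Rightarrow> 'a::banach" and R :: nat and ns :: "nat \<Rightarrow> nat"
  assumes L: "\<And>s t. norm (f s - f t) \<le> \<bar>s - t\<bar>" and Rpos: "R > 0"
    and Kc: "compact (closure (slopes f))"
    and ns: "strict_mono ns" "\<And>k p. Dl f R (ns k) p \<le> (1/8)^k"
begin

definition D :: "nat \<Rightarrow> real \<Rightarrow> 'a" where
  "D k = stp (ns k) (dq f (ns k))"

definition J :: "nat \<Rightarrow> int set" where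
  "J k = {i \<in> {- (int R * 2^ns (Suc k))..<int R * 2^ns (Suc k)}.
      norm (dq f (ns (Suc k)) i - dq f (ns k) (i div 2^(ns (Suc k) - ns k))) > (1/2)^k}"

definition U :: "nat \<Rightarrow> real set" where
  "U k = (\<Union>i\<in>J k. {real_of_int i / 2^ns (Suc k) .. real_of_int (i+1) / 2^ns (Suc k)})"

definition N0 :: "real set" where
  "N0 = (\<Inter>j. \<Union>k. U (k + j))"

definition F :: "real \<Rightarrow> 'a" where
  "F x = lim (\<lambda>k. D k x)"

lemma D_norm: "norm (D k x) \<le> 1"
  unfolding D_def by (rule stp_dq_norm[OF L])

lemma D_slopes: "D k x \<in> slopes f"
  unfolding D_def stp_def by (rule dq_slopes)

lemma finite_J: "finite (J k)" unfolding J_def by (rule finite_subset[OF _ finite_atLeastLessThan_int]) auto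

lemma U_compact: "compact (U k)"
  unfolding U_def using finite_J by (intro compact_UN) auto

lemma U_lmeasurable: "U k \<in> lmeasurable"
  by (rule lmeasurable_compact[OF U_compact])

lemma card_J: "real (card (J k)) / 2^ns (Suc k) \<le> (1/4)^k"
proof -
  define m where "m = ns (Suc k)"
  define n where "n = ns k"
  have nm: "n \<le> m" unfolding m_def n_def using ns(1) by (simp add: strict_mono_less_eq)
  have "real (card (J k)) / 2^m * (1/2)^k = (\<Sum>i\<in>J k. (1/2^m) * (1/2)^k)"
    by simp
  also have "\<dots> \<le> (\<Sum>i\<in>J k. (1/2^m) * norm (dq f m i - dq f n (i div 2^(m - n))))"
    by (rule sum_mono) (auto simp: J_def m_def n_def less_imp_le divide_right_mono)
  also have "\<dots> \<le> (\<Sum>i\<in>{- (int R * 2^m)..<int R * 2^m}. (1/2^m) * norm (dq f m i - dq f n (i div 2^(m - n))))"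
    by (rule sum_mono2) (auto simp: J_def m_def n_def)
  also have "\<dots> = Dl f R n (m - n)"
    using nm by (simp add: Dl_def[OF L Rpos])
  also have "\<dots> \<le> (1/8)^k" unfolding n_def by (rule ns(2))
  finally have "real (card (J k)) / 2^m * (1/2)^k \<le> (1/8)^k" .
  moreover have "(1/8::real)^k = (1/4)^k * (1/2)^k" by (simp add: power_mult_distrib[symmetric])
  ultimately have "(real (card (J k)) / 2^m) * (1/2)^k \<le> (1/4)^k * (1/2)^k" by simp
  moreover have q: "(0::real) < (1/2)^k" by simp
  ultimately have "real (card (J k)) / 2^m \<le> (1/4)^k" by (rule mult_right_le_imp_le)
  then show ?thesis unfolding m_def .
qed

lemma measure_U: "measure lebesgue (U k) \<le> (1/4)^k"
proof -
  have "measure lebesgue (U k) \<le> (\<Sum>i\<in>J k. measure lebesgue {real_of_int i / 2^ns (Suc k) .. real_of_int (i+1) / 2^ns (Suc k)})"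
    unfolding U_def by (rule measure_UNION_le[OF finite_J]) auto
  also have "\<dots> = (\<Sum>i\<in>J k. 1 / 2^ns (Suc k))"
    by (rule sum.cong) (auto simp: field_simps)
  also have "\<dots> = real (card (J k)) / 2^ns (Suc k)" by simp
  also have "\<dots> \<le> (1/4)^k" by (rule card_J)
  finally show ?thesis .
qed

lemma N0_negligible: "negligible N0"
  unfolding negligible_outer_le
proof (intro allI impI)
  fix e :: real assume e: "e > 0"
  obtain j where j: "(1/4::real)^j < e/2"
    using real_arch_pow_inv[of "e/2" "1/4"] e by auto
  define T where "T = (\<Union>k. U (k + j))"
  have "T \<in> fmeasurable lebesgue" "measure lebesgue T \<le> 2 * (1/4)^j"
  proof -
    have B: "measure lebesgue (\<Union>i\<le>n. U (i + j)) \<le> 2 * (1/4)^j" for n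
    proof -
      have "measure lebesgue (\<Union>i\<le>n. U (i + j)) \<le> (\<Sum>i\<le>n. measure lebesgue (U (i + j)))"
        by (rule measure_UNION_le) (auto intro: fmeasurableD U_lmeasurable)
      also have "\<dots> \<le> (\<Sum>i\<le>n. (1/4::real)^(i+j))" by (rule sum_mono) (rule measure_U)
      also have "\<dots> \<le> 2 * (1/4)^j" by (rule geom_quarter)
      finally show ?thesis .
    qed
    show "T \<in> fmeasurable lebesgue" "measure lebesgue T \<le> 2 * (1/4)^j"
      unfolding T_def using fmeasurable_countable_Union[OF U_lmeasurable B]
        measure_countable_Union_le[OF U_lmeasurable B] by auto
  qed
  moreover have "N0 \<subseteq> T" unfolding N0_def T_def by blast
  ultimately show "\<exists>T. N0 \<subseteq> T \<and> T \<in> lmeasurable \<and> measure lebesgue T \<le> e"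
    using j by (intro exI[of _ T]) auto
qed

lemma step_bound:
  assumes x: "x \<in> {- real R..<real R}" and nx: "x \<notin> U k"
  shows "norm (D (Suc k) x - D k x) \<le> (1/2)^k"
proof -
  define m where "m = ns (Suc k)"
  define n where "n = ns k"
  have nm: "n \<le> m" unfolding m_def n_def using ns(1) by (simp add: strict_mono_less_eq)
  define i where "i = \<lfloor>2^m * x\<rfloor>"
  have r1: "- (int R * 2^m) \<le> i"
  proof -
    have "- real R * 2^m \<le> x * 2^m" using x by (intro mult_right_mono) auto
    then have "- (real R * 2^m) \<le> 2^m * x" by (simp add: mult.commute)
    then show ?thesis unfolding i_def le_floor_iff by simp
  qed
  have r2: "i < int R * 2^m"
  proof -
    have "x * 2^m < real R * 2^m" using x by (intro mult_strict_right_mono) auto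
    then have "2^m * x < real R * 2^m" by (simp add: mult.commute)
    then show ?thesis unfolding i_def floor_less_iff by simp
  qed
  have xin: "x \<in> {real_of_int i / 2^m .. real_of_int (i+1) / 2^m}"
    unfolding i_def by (simp add: field_simps) linarith
  have "i \<notin> J k" using nx xin unfolding U_def m_def by blast
  then have "norm (dq f m i - dq f n (i div 2^(m - n))) \<le> (1/2)^k"
    using r1 r2 unfolding J_def m_def n_def by auto
  moreover have "D (Suc k) x = dq f m i" unfolding D_def stp_def m_def i_def ..
  moreover have "D k x = dq f n (i div 2^(m-n))"
    unfolding D_def stp_def i_def n_def m_def using floor_level[OF nm[unfolded m_def n_def]] by simp
  ultimately show ?thesis by simp
qed

definition G0 :: "real set" where "G0 = {- real R..<real R} - N0"

lemma D_conv: "x \<in> G0 \<Longrightarrow> (\<lambda>k. D k x) \<longlonglongrightarrow> F x"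
proof -
  assume x: "x \<in> G0"
  then obtain j where "\<And>k. x \<notin> U (k + j)" unfolding G0_def N0_def by blast
  then have "\<And>k. k \<ge> j \<Longrightarrow> x \<notin> U k" by (metis le_add_diff_inverse2)
  then have "\<And>k. k \<ge> j \<Longrightarrow> norm (D (Suc k) x - D k x) \<le> (1/2)^k"
    using x step_bound unfolding G0_def by blast
  then have "convergent (\<lambda>k. D k x)" by (rule cauchy_geometric)
  then show ?thesis unfolding F_def by (simp add: convergent_LIMSEQ_iff)
qed

lemma F_mem: "x \<in> G0 \<Longrightarrow> F x \<in> closure (slopes f)"
  by (rule closed_sequentially[OF closed_closure _ D_conv]) (use D_slopes closure_subset in auto)

lemma F_norm: "x \<in> G0 \<Longrightarrow> norm (F x) \<le> 1"
  by (rule Lim_norm_ubound[OF _ D_conv]) (auto simp: D_norm)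

lemma G0_negl: "negligible ({- real R..real R} - G0)"
proof -
  have "{- real R..real R} - G0 \<subseteq> N0 \<union> {real R}" unfolding G0_def by auto
  then show ?thesis using N0_negligible by (metis negligible_Un negligible_sing negligible_subset)
qed

end

lemma stp2_eq:
  "(\<lambda>x. \<phi> (h1 \<lfloor>2^n1 * x\<rfloor>) (h2 \<lfloor>2^n2 * x\<rfloor>)) =
   stp (max n1 n2) (\<lambda>i. \<phi> (h1 (i div 2^(max n1 n2 - n1))) (h2 (i div 2^(max n1 n2 - n2))))"
  unfolding stp_def using floor_level[of n1 "max n1 n2"] floor_level[of n2 "max n1 n2"] by auto

lemma stp2_integrable:
  "(\<lambda>x. (\<phi> (h1 \<lfloor>(2::real)^n1 * x\<rfloor>) (h2 \<lfloor>(2::real)^n2 * x\<rfloor>) :: 'b::banach)) integrable_on {a..b}"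
  unfolding stp2_eq by (rule stp_integrable)

lemma stp_const_piece:
  fixes h :: "int \<Rightarrow> 'a::banach"
  assumes "s \<le> t" "real_of_int k / 2^n \<le> s" "t \<le> real_of_int (k+1) / 2^n"
  shows "integral {s..t} (stp n h) = (t - s) *\<^sub>R h k"
proof -
  have hc: "((\<lambda>x. h k) has_integral (t - s) *\<^sub>R h k) {s..t}"
    using has_integral_const_real[of "h k" s t] assms(1) by simp
  have hs: "stp n h x = h k" if "x \<in> {s..t} - {t}" for x
  proof -
    from that have x: "s \<le> x" "x < t" by auto
    have 1: "s * 2^n \<le> x * 2^n" using x by (intro mult_right_mono) auto
    have 2: "x * 2^n < t * 2^n" using x by (intro mult_strict_right_mono) auto
    from assms have "real_of_int k \<le> s * 2^n" "t * 2^n \<le> real_of_int k + 1"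
      by (auto simp: field_simps)
    then have "real_of_int k \<le> x * 2^n" "x * 2^n < real_of_int k + 1" using 1 2 by linarith+
    then have "\<lfloor>x * 2^n\<rfloor> = k" by linarith
    then have "\<lfloor>2^n * x\<rfloor> = k" by (simp add: mult.commute)
    then show ?thesis by (simp add: stp_def)
  qed
  show ?thesis
    by (rule integral_unique[OF has_integral_spike[OF negligible_sing hs hc]])
qed

lemma stp_avg_convex:
  fixes h :: "int \<Rightarrow> 'a::banach"
  assumes Cv: "convex Cv" and hC: "\<And>i. h i \<in> Cv" and st: "s < t"
  shows "(1/(t-s)) *\<^sub>R integral {s..t} (stp n h) \<in> Cv"
proof -
  have "\<forall>s t. s < t \<longrightarrow> nat (\<lceil>2^n * t\<rceil> - \<lfloor>2^n * s\<rfloor>) = N \<longrightarrow> (1/(t-s)) *\<^sub>R integral {s..t} (stp n h) \<in> Cv" for N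
  proof (induction N rule: less_induct)
    case (less N)
    show ?case
    proof (intro allI impI)
      fix s t :: real assume st: "s < t" and N: "nat (\<lceil>2^n * t\<rceil> - \<lfloor>2^n * s\<rfloor>) = N"
      define k where "k = \<lfloor>2^n * s\<rfloor>"
      define p where "p = real_of_int (k+1) / 2^n"
      have ks: "real_of_int k / 2^n \<le> s" unfolding k_def by (simp add: field_simps)
      have sp: "s < p" unfolding p_def k_def by (simp add: field_simps) linarith
      show "(1/(t-s)) *\<^sub>R integral {s..t} (stp n h) \<in> Cv"
      proof (cases "t \<le> p")
        case True
        have "integral {s..t} (stp n h) = (t - s) *\<^sub>R h k"
          by (rule stp_const_piece) (use st ks True in \<open>auto simp: p_def\<close>)
        then show ?thesis using st hC by simp
      next
        case False
        have I: "stp n h integrable_on {s..t}" by (rule stp_integrable)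
        have split: "integral {s..t} (stp n h) = integral {s..p} (stp n h) + integral {p..t} (stp n h)"
          using Henstock_Kurzweil_Integration.integral_combine[of s p t "stp n h"] sp False I by simp
        have i1: "integral {s..p} (stp n h) = (p - s) *\<^sub>R h k"
          by (rule stp_const_piece) (use sp ks in \<open>auto simp: p_def\<close>)
        have lessN: "nat (\<lceil>2^n * t\<rceil> - \<lfloor>2^n * p\<rfloor>) < N"
        proof -
          have "\<lfloor>2^n * p\<rfloor> = k + 1" unfolding p_def by simp
          moreover have "\<lceil>2^n * t\<rceil> \<ge> k + 1"
          proof -
            have "2^n * t > 2^n * p" using False by simp
            then have "2^n * t > real_of_int (k+1)" unfolding p_def by simp
            then show ?thesis by linarith
          qed
          ultimately show ?thesis using N unfolding k_def by linarith
        qed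
        have a2: "(1/(t-p)) *\<^sub>R integral {p..t} (stp n h) \<in> Cv"
          using less.IH[OF lessN] False by auto
        define lam where "lam = (p - s) / (t - s)"
        have l01: "0 \<le> lam" "lam \<le> 1" using sp False st unfolding lam_def by (auto simp: field_simps)
        have "(1/(t-s)) *\<^sub>R integral {s..t} (stp n h) = lam *\<^sub>R h k + (1 - lam) *\<^sub>R ((1/(t-p)) *\<^sub>R integral {p..t} (stp n h))"
        proof -
          have e1: "1 - lam = (t - p)/(t - s)" unfolding lam_def using st by (simp add: field_simps)
          have e0: "(t - p)/(t - s) * (1/(t-p)) = 1/(t-s)" using sp False by (simp add: field_simps)
          have e2: "(1 - lam) *\<^sub>R ((1/(t-p)) *\<^sub>R integral {p..t} (stp n h)) = (1/(t-s)) *\<^sub>R integral {p..t} (stp n h)"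
            unfolding e1 scaleR_scaleR e0 ..
          have e3: "lam *\<^sub>R h k = (1/(t-s)) *\<^sub>R ((p-s) *\<^sub>R h k)" by (simp add: lam_def)
          show ?thesis unfolding split i1 e2 e3 scaleR_add_right ..
        qed
        also have "\<dots> \<in> Cv"
          by (rule convexD[OF Cv hC a2]) (use l01 in auto)
        finally show ?thesis .
      qed
    qed
  qed
  then show ?thesis using st by blast
qed

context approx
begin

lemma D_stp: "D k = stp (ns k) (dq f (ns k))" by (simp add: D_def)

lemma G0_sub: "G0 \<subseteq> {- real R..real R}" unfolding G0_def by auto

lemma dct:
  fixes \<Theta> :: "real \<Rightarrow> 'a \<Rightarrow> real"
  assumes ab: "- real R \<le> a" "b \<le> real R"
    and int: "\<And>k. (\<lambda>x. \<Theta> x (D k x)) integrable_on {a..b}"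
    and cont: "\<And>x y. isCont (\<Theta> x) y"
    and bnd: "\<And>x y. norm y \<le> 1 \<Longrightarrow> \<bar>\<Theta> x y\<bar> \<le> B"
  shows "(\<lambda>x. \<Theta> x (F x)) integrable_on {a..b}"
    and "(\<lambda>k. integral {a..b} (\<lambda>x. \<Theta> x (D k x))) \<longlonglongrightarrow> integral {a..b} (\<lambda>x. \<Theta> x (F x))"
proof -
  define S where "S = {a..b} \<inter> G0"
  have negS: "negligible ({a..b} - S)"
    by (rule negligible_subset[OF G0_negl]) (use ab in \<open>auto simp: S_def\<close>)
  have eqS: "negligible ((S - {a..b}) \<union> ({a..b} - S))"
    using negS by (simp add: S_def Diff_Int)
  have eqS': "negligible (({a..b} - S) \<union> (S - {a..b}))"
    using eqS by (simp add: Un_commute)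
  have intS: "(\<lambda>x. \<Theta> x (D k x)) integrable_on S" for k
    using int integrable_spike_set_eq[OF eqS'] by blast
  have hS: "(\<lambda>x. B) integrable_on S"
    using integrable_spike_set_eq[OF eqS'] integrable_const_ivl by blast
  have conv: "(\<lambda>k. \<Theta> x (D k x)) \<longlonglongrightarrow> \<Theta> x (F x)" if "x \<in> S" for x
    using that by (intro isCont_tendsto_compose[OF cont D_conv]) (auto simp: S_def)
  have bnd': "norm (\<Theta> x (D k x)) \<le> B" for k x using bnd[OF D_norm] by simp
  have r1: "(\<lambda>x. \<Theta> x (F x)) integrable_on S"
    by (rule dominated_convergence(1)[OF intS hS bnd' conv])
  have r2: "(\<lambda>k. integral S (\<lambda>x. \<Theta> x (D k x))) \<longlonglongrightarrow> integral S (\<lambda>x. \<Theta> x (F x))"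
    by (rule dominated_convergence(2)[OF intS hS bnd' conv])
  show "(\<lambda>x. \<Theta> x (F x)) integrable_on {a..b}"
    using r1 integrable_spike_set_eq[OF eqS] by blast
  have e: "integral S g = integral {a..b} g" for g :: "real \<Rightarrow> real"
    by (rule integral_spike_set) (use eqS in \<open>auto intro: negligible_subset\<close>)
  show "(\<lambda>k. integral {a..b} (\<lambda>x. \<Theta> x (D k x))) \<longlonglongrightarrow> integral {a..b} (\<lambda>x. \<Theta> x (F x))"
    using r2 unfolding e .
qed

end

locale approx_rho = approx f R ns for f :: "real \<Rightarrow> 'a::banach" and R ns +
  fixes \<rho> :: "'a \<Rightarrow> 'a" and \<kappa> :: real
  assumes rho_cont: "\<And>y. isCont \<rho> y" and rho_norm: "\<And>v. norm (\<rho> v) \<le> 1"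
    and rho_close: "\<And>v. norm v \<le> 1 \<Longrightarrow> norm (v - \<rho> v) \<le> \<kappa>"
begin

definition Gk :: "nat \<Rightarrow> real \<Rightarrow> 'a" where
  "Gk k t = integral {- real R..t} (\<lambda>x. \<rho> (D k x))"

definition gam :: "real \<Rightarrow> 'a" where
  "gam t = lim (\<lambda>k. Gk k t)"

lemma rD_stp: "(\<lambda>x. \<rho> (D k x)) = stp (ns k) (\<lambda>i. \<rho> (dq f (ns k) i))"
  by (rule ext) (simp add: D_def stp_def)

lemma rD_int: "(\<lambda>x. \<rho> (D k x)) integrable_on {a..b}"
  unfolding rD_stp by (rule stp_integrable)

lemma rD2_int: "(\<lambda>x. \<Phi> (D k x) (D l x) :: real) integrable_on {a..b}"
  unfolding D_def stp_def by (rule stp2_integrable[where \<phi>=\<Phi>])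

lemma rD1_int: "(\<lambda>x. \<Phi> (D k x) :: real) integrable_on {a..b}"
proof -
  have "(\<lambda>x. \<Phi> (D k x)) = stp (ns k) (\<lambda>i. \<Phi> (dq f (ns k) i))"
    by (rule ext) (simp add: D_def stp_def)
  then show ?thesis by (simp add: stp_integrable)
qed

lemma A1: "(\<lambda>x. norm (\<rho> (D k x) - \<rho> (F x))) integrable_on {- real R..real R}"
proof (rule dct(1)[where \<Theta>="\<lambda>x y. norm (\<rho> (D k x) - \<rho> y)" and B=2])
  show "(\<lambda>x. norm (\<rho> (D k x) - \<rho> (D l x))) integrable_on {- real R..real R}" for l
    by (rule rD2_int[where \<Phi>="\<lambda>a b. norm (\<rho> a - \<rho> b)"])
  show "isCont (\<lambda>y. norm (\<rho> (D k x) - \<rho> y)) y" for x y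
    by (intro continuous_intros rho_cont)
  show "\<bar>norm (\<rho> (D k x) - \<rho> y)\<bar> \<le> 2" for x y
    using norm_triangle_ineq4[of "\<rho> (D k x)" "\<rho> y"] rho_norm[of "D k x"] rho_norm[of y] by simp
qed auto

definition ak :: "nat \<Rightarrow> real" where
  "ak k = integral {- real R..real R} (\<lambda>x. norm (\<rho> (D k x) - \<rho> (F x)))"

lemma A2: "ak \<longlonglongrightarrow> 0"
proof -
  have "(\<lambda>k. integral {- real R..real R} (\<lambda>x. norm (\<rho> (D k x) - \<rho> (F x))))
     \<longlonglongrightarrow> integral {- real R..real R} (\<lambda>x. norm (\<rho> (F x) - \<rho> (F x)))"
  proof (rule dct(2)[where \<Theta>="\<lambda>x y. norm (\<rho> y - \<rho> (F x))" and B=2])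
    show "(\<lambda>x. norm (\<rho> (D k x) - \<rho> (F x))) integrable_on {- real R..real R}" for k
      by (rule A1)
    show "isCont (\<lambda>y. norm (\<rho> y - \<rho> (F x))) y" for x y
      by (intro continuous_intros rho_cont)
    show "\<bar>norm (\<rho> y - \<rho> (F x))\<bar> \<le> 2" for x y
      using norm_triangle_ineq4[of "\<rho> y" "\<rho> (F x)"] rho_norm[of "F x"] rho_norm[of y] by simp
  qed auto
  then show ?thesis unfolding ak_def by simp
qed

lemma Gk_cauchy_bound:
  assumes t: "t \<in> {- real R..real R}"
  shows "norm (Gk k t - Gk l t) \<le> ak k + ak l"
proof -
  have "Gk k t - Gk l t = integral {- real R..t} (\<lambda>x. \<rho> (D k x) - \<rho> (D l x))"
    unfolding Gk_def by (rule integral_diff[symmetric]) (auto intro: rD_int)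
  also have "norm \<dots> \<le> integral {- real R..t} (\<lambda>x. norm (\<rho> (D k x) - \<rho> (D l x)))"
    by (rule integral_norm_bound_integral)
       (auto intro: integrable_diff rD_int rD2_int[where \<Phi>="\<lambda>a b. norm (\<rho> a - \<rho> b)"])
  also have "\<dots> \<le> integral {- real R..real R} (\<lambda>x. norm (\<rho> (D k x) - \<rho> (D l x)))"
    by (rule integral_subset_le) (use t in \<open>auto intro: rD2_int[where \<Phi>="\<lambda>a b. norm (\<rho> a - \<rho> b)"]\<close>)
  also have "\<dots> \<le> integral {- real R..real R} (\<lambda>x. norm (\<rho> (D k x) - \<rho> (F x)) + norm (\<rho> (D l x) - \<rho> (F x)))"
  proof (rule integral_le)
    show "(\<lambda>x. norm (\<rho> (D k x) - \<rho> (D l x))) integrable_on {- real R..real R}"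
      by (rule rD2_int[where \<Phi>="\<lambda>a b. norm (\<rho> a - \<rho> b)"])
    show "(\<lambda>x. norm (\<rho> (D k x) - \<rho> (F x)) + norm (\<rho> (D l x) - \<rho> (F x))) integrable_on {- real R..real R}"
      by (intro integrable_add A1)
    show "norm (\<rho> (D k x) - \<rho> (D l x)) \<le> norm (\<rho> (D k x) - \<rho> (F x)) + norm (\<rho> (D l x) - \<rho> (F x))" for x
      using norm_diff_triangle_ineq[of "\<rho> (D k x)" "\<rho> (F x)" "\<rho> (F x)" "\<rho> (D l x)"]
      by (simp add: norm_minus_commute)
  qed
  also have "\<dots> = ak k + ak l"
    unfolding ak_def by (rule integral_add) (auto intro: A1)
  finally show ?thesis .
qed

lemma Gk_conv:
  assumes t: "t \<in> {- real R..real R}"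
  shows "(\<lambda>k. Gk k t) \<longlonglongrightarrow> gam t"
proof -
  have "Cauchy (\<lambda>k. Gk k t)"
  proof (rule metric_CauchyI)
    fix e :: real assume e: "e > 0"
    obtain N where N: "\<And>k. k \<ge> N \<Longrightarrow> \<bar>ak k\<bar> < e/2"
      using A2 e unfolding LIMSEQ_def by (metis dist_real_def diff_zero half_gt_zero)
    show "\<exists>M. \<forall>m\<ge>M. \<forall>n\<ge>M. dist (Gk m t) (Gk n t) < e"
    proof (intro exI allI impI)
      fix m n assume "m \<ge> N" "n \<ge> N"
      then show "dist (Gk m t) (Gk n t) < e"
        using Gk_cauchy_bound[OF t, of m n] N[of m] N[of n] by (simp add: dist_norm)
    qed
  qed
  then show ?thesis unfolding gam_def by (simp add: Cauchy_convergent_iff convergent_LIMSEQ_iff)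
qed

lemma Gk_diff:
  assumes "- real R \<le> s" "s \<le> t"
  shows "Gk k t - Gk k s = integral {s..t} (\<lambda>x. \<rho> (D k x))"
  unfolding Gk_def
  using Henstock_Kurzweil_Integration.integral_combine[OF assms rD_int] by (simp add: algebra_simps)

lemma gam_diff_lim:
  assumes "- real R \<le> s" "s \<le> t" "t \<le> real R"
  shows "(\<lambda>k. integral {s..t} (\<lambda>x. \<rho> (D k x))) \<longlonglongrightarrow> gam t - gam s"
proof -
  have "(\<lambda>k. Gk k t - Gk k s) \<longlonglongrightarrow> gam t - gam s"
    using assms by (intro tendsto_diff Gk_conv) auto
  then show ?thesis using Gk_diff[OF assms(1,2)] by simp
qed

lemma gam_lip:
  assumes "- real R \<le> s" "s \<le> t" "t \<le> real R"
  shows "norm (gam t - gam s) \<le> t - s"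
proof (rule Lim_norm_ubound[OF _ gam_diff_lim[OF assms]])
  show "\<forall>\<^sub>F k in sequentially. norm (integral {s..t} (\<lambda>x. \<rho> (D k x))) \<le> t - s"
    using integral_norm_le_const[OF rD_int assms(2), where B=1] rho_norm by auto
qed simp

lemma ns_ge: "k \<le> ns k" using ns(1) by (rule strict_mono_imp_increasing)

lemma four_lim: "(\<lambda>k. 4 / 2^ns k :: real) \<longlonglongrightarrow> 0"
proof -
  have "(\<lambda>k. 4 * (1/2::real)^k) \<longlonglongrightarrow> 4 * 0"
    by (intro tendsto_mult tendsto_const LIMSEQ_power_zero) auto
  then have l0: "(\<lambda>k. 4 * (1/2::real)^k) \<longlonglongrightarrow> 0" by simp
  have b: "norm (4 / 2^ns k :: real) \<le> 4 * (1/2)^k" for k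
  proof -
    have "(2::real)^k \<le> 2^ns k" using ns_ge by (simp add: power_increasing)
    then show ?thesis by (simp add: field_simps power_one_over)
  qed
  show ?thesis
    by (rule Lim_null_comparison[OF always_eventually[OF allI[OF b]] l0])
qed

lemma gam_f:
  assumes "- real R \<le> s" "s \<le> t" "t \<le> real R"
  shows "norm ((f t - f s) - (gam t - gam s)) \<le> \<kappa> * (t - s)"
proof -
  have seq: "norm (f t - f s - integral {s..t} (\<lambda>x. \<rho> (D k x))) \<le> 4 / 2^ns k + \<kappa> * (t - s)" for k
  proof -
    have e1: "norm (integral {s..t} (D k) - (f t - f s)) \<le> 4 / 2^ns k"
      unfolding D_def by (rule stp_dq_integral[OF L assms(2)])
    have i1: "D k integrable_on {s..t}" unfolding D_def by (rule stp_integrable)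
    have i2: "(\<lambda>x. D k x - \<rho> (D k x)) integrable_on {s..t}"
      using integrable_diff[OF i1 rD_int] .
    have "norm (0 - \<rho> 0) \<le> \<kappa>" by (rule rho_close) simp
    then have k0: "0 \<le> \<kappa>" using norm_ge_zero[of "0 - \<rho> 0"] by linarith
    have e2: "norm (integral {s..t} (\<lambda>x. D k x - \<rho> (D k x))) \<le> \<kappa> * (t - s)"
      by (rule integral_norm_le_const[OF i2 assms(2) rho_close[OF D_norm] k0])
    have "integral {s..t} (\<lambda>x. D k x - \<rho> (D k x)) = integral {s..t} (D k) - integral {s..t} (\<lambda>x. \<rho> (D k x))"
      using integral_diff[OF i1 rD_int] .
    then have eq: "f t - f s - integral {s..t} (\<lambda>x. \<rho> (D k x)) =
        integral {s..t} (\<lambda>x. D k x - \<rho> (D k x)) - (integral {s..t} (D k) - (f t - f s))"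
      by (simp add: algebra_simps)
    have "norm (f t - f s - integral {s..t} (\<lambda>x. \<rho> (D k x))) \<le>
        norm (integral {s..t} (\<lambda>x. D k x - \<rho> (D k x))) + norm (integral {s..t} (D k) - (f t - f s))"
      unfolding eq by (rule norm_triangle_ineq4)
    then show ?thesis using e1 e2 by linarith
  qed
  have l1: "(\<lambda>k. norm (f t - f s - integral {s..t} (\<lambda>x. \<rho> (D k x)))) \<longlonglongrightarrow> norm (f t - f s - (gam t - gam s))"
    by (intro tendsto_norm tendsto_diff tendsto_const gam_diff_lim[OF assms])
  have l2: "(\<lambda>k. 4 / 2^ns k + \<kappa> * (t - s)) \<longlonglongrightarrow> 0 + \<kappa> * (t - s)"
    by (intro tendsto_add four_lim tendsto_const)
  show ?thesis using LIMSEQ_le[OF l1 l2] seq by simp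
qed

lemma gam_slope:
  assumes "- real R \<le> s" "s < t" "t \<le> real R"
  shows "(1/(t-s)) *\<^sub>R (gam t - gam s) \<in> closure (convex hull (\<rho> ` slopes f))"
proof (rule closed_sequentially[OF closed_closure])
  show "(\<lambda>k. (1/(t-s)) *\<^sub>R integral {s..t} (\<lambda>x. \<rho> (D k x))) \<longlonglongrightarrow> (1/(t-s)) *\<^sub>R (gam t - gam s)"
    using assms by (intro tendsto_scaleR tendsto_const gam_diff_lim) auto
  show "(1/(t-s)) *\<^sub>R integral {s..t} (\<lambda>x. \<rho> (D k x)) \<in> closure (convex hull (\<rho> ` slopes f))" for k
  proof -
    have "(1/(t-s)) *\<^sub>R integral {s..t} (stp (ns k) (\<lambda>i. \<rho> (dq f (ns k) i))) \<in> convex hull (\<rho> ` slopes f)"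
      by (rule stp_avg_convex[OF convex_convex_hull _ assms(2)]) (intro hull_inc imageI dq_slopes)
    then show ?thesis unfolding rD_stp using closure_subset by blast
  qed
qed

end

context approx_rho
begin

lemma gam_deriv_bound:
  assumes "- real R \<le> s" "s \<le> t" "t \<le> real R"
  shows "(\<lambda>x. norm (\<rho> (F x) - w)) integrable_on {s..t}"
    and "norm ((gam t - gam s) - (t - s) *\<^sub>R w) \<le> integral {s..t} (\<lambda>x. norm (\<rho> (F x) - w))"
proof -
  have D1: "(\<lambda>x. norm (\<rho> (F x) - w)) integrable_on {s..t}"
   and D2: "(\<lambda>k. integral {s..t} (\<lambda>x. norm (\<rho> (D k x) - w))) \<longlonglongrightarrow> integral {s..t} (\<lambda>x. norm (\<rho> (F x) - w))"
  proof -
    have "- real R \<le> s" "t \<le> real R" using assms by auto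
    note dd = dct[OF this, where \<Theta>="\<lambda>x y. norm (\<rho> y - w)" and B="1 + norm w"]
    have i: "(\<lambda>x. norm (\<rho> (D k x) - w)) integrable_on {s..t}" for k
      by (rule rD1_int[where \<Phi>="\<lambda>a. norm (\<rho> a - w)"])
    have c: "isCont (\<lambda>y. norm (\<rho> y - w)) y" for y by (intro continuous_intros rho_cont)
    have b: "\<bar>norm (\<rho> y - w)\<bar> \<le> 1 + norm w" for y
      using norm_triangle_ineq4[of "\<rho> y" w] rho_norm[of y] by simp
    show "(\<lambda>x. norm (\<rho> (F x) - w)) integrable_on {s..t}" using dd(1)[OF i c b] .
    show "(\<lambda>k. integral {s..t} (\<lambda>x. norm (\<rho> (D k x) - w))) \<longlonglongrightarrow> integral {s..t} (\<lambda>x. norm (\<rho> (F x) - w))"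
      using dd(2)[OF i c b] .
  qed
  show "(\<lambda>x. norm (\<rho> (F x) - w)) integrable_on {s..t}" by (rule D1)
  show "norm ((gam t - gam s) - (t - s) *\<^sub>R w) \<le> integral {s..t} (\<lambda>x. norm (\<rho> (F x) - w))"
  proof -
    have seq: "norm (integral {s..t} (\<lambda>x. \<rho> (D k x)) - (t - s) *\<^sub>R w) \<le> integral {s..t} (\<lambda>x. norm (\<rho> (D k x) - w))" for k
    proof -
      have i1: "(\<lambda>x. \<rho> (D k x) - w) integrable_on {s..t}"
        using integrable_diff[OF rD_int integrable_const_ivl] .
      have "integral {s..t} (\<lambda>x. \<rho> (D k x) - w) = integral {s..t} (\<lambda>x. \<rho> (D k x)) - (t - s) *\<^sub>R w"
        using assms integral_diff[OF rD_int integrable_const_ivl, of s t k w] by simp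
      moreover have "norm (integral {s..t} (\<lambda>x. \<rho> (D k x) - w)) \<le> integral {s..t} (\<lambda>x. norm (\<rho> (D k x) - w))"
        by (rule integral_norm_bound_integral[OF i1 rD1_int[where \<Phi>="\<lambda>a. norm (\<rho> a - w)"]]) simp
      ultimately show ?thesis by simp
    qed
    have l1: "(\<lambda>k. norm (integral {s..t} (\<lambda>x. \<rho> (D k x)) - (t - s) *\<^sub>R w)) \<longlonglongrightarrow> norm ((gam t - gam s) - (t - s) *\<^sub>R w)"
      by (intro tendsto_norm tendsto_diff tendsto_const gam_diff_lim[OF assms])
    show ?thesis using LIMSEQ_le[OF l1 D2] seq by simp
  qed
qed

end

lemma density_bad_negligible:
  fixes E :: "real set"
  assumes E: "E \<in> sets lebesgue" "bounded E" and e: "e > 0"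
  shows "negligible {x \<in> E. \<forall>d>0. \<exists>r. 0 < r \<and> r < d \<and> e * (2*r) \<le> measure lebesgue (ball x r - E)}"
    (is "negligible ?S")
  unfolding negligible_outer_le
proof (intro allI impI)
  fix \<delta> :: real assume \<delta>: "\<delta> > 0"
  obtain Op where Op: "open Op" "E \<subseteq> Op" "(Op - E) \<in> lmeasurable" "emeasure lebesgue (Op - E) < ennreal (e * \<delta> / 2)"
    using sets_lebesgue_outer_open[OF E(1), of "e * \<delta> / 2"] e \<delta> by auto
  obtain M where M: "E \<subseteq> ball 0 M" using bounded_subset_ballD[OF E(2)] by blast
  define Op2 where "Op2 = Op \<inter> ball 0 M"
  have Op2: "open Op2" "E \<subseteq> Op2" "bounded Op2" using Op M unfolding Op2_def by auto
  have mO: "measure lebesgue (Op2 - E) < e * \<delta> / 2"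
  proof -
    have "measure lebesgue (Op2 - E) \<le> measure lebesgue (Op - E)"
      by (rule measure_mono_fmeasurable) (use Op E in \<open>auto simp: Op2_def intro: sets.Diff\<close>)
    also have "measure lebesgue (Op - E) < e * \<delta> / 2"
      using Op(3,4) e \<delta> by (simp add: emeasure_eq_measure2 ennreal_less_iff)
    finally show ?thesis .
  qed
  define K where "K = {(x, r). x \<in> ?S \<and> 0 < r \<and> ball x r \<subseteq> Op2 \<and> e * (2*r) \<le> measure lebesgue (ball x r - E)}"
  have cov: "\<exists>i. i \<in> K \<and> x \<in> ball (fst i) (snd i) \<and> snd i < d" if xS: "x \<in> ?S" and dpos: "0 < d" for x d
  proof -
    have "x \<in> Op2" using xS Op2 by auto
    then obtain d0 where d0: "d0 > 0" "ball x d0 \<subseteq> Op2" using Op2(1) open_contains_ball by blast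
    obtain r where r: "0 < r" "r < min d d0" "e * (2*r) \<le> measure lebesgue (ball x r - E)"
    proof -
      have "\<forall>d>0. \<exists>r. 0 < r \<and> r < d \<and> e * (2*r) \<le> measure lebesgue (ball x r - E)" using xS by blast
      moreover have "min d d0 > 0" using d0 dpos by simp
      ultimately show ?thesis using that by blast
    qed
    have "ball x r \<subseteq> Op2" using d0 r by (meson min_less_iff_conj order.strict_implies_order subset_ball subset_trans)
    then show ?thesis using r xS by (intro exI[of _ "(x, r)"]) (auto simp: K_def)
  qed
  obtain C where C: "countable C" "C \<subseteq> K"
    and pw: "pairwise (\<lambda>i j. disjnt (ball (fst i) (snd i)) (ball (fst j) (snd j))) C"
    and neg: "negligible (?S - (\<Union>i\<in>C. ball (fst i) (snd i)))"
    by (rule Vitali_covering_theorem_balls[of ?S K fst snd, OF cov])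
  have Kball: "ball (fst i) (snd i) \<in> fmeasurable lebesgue" if "i \<in> K" for i
    using that unfolding K_def by (auto intro: bounded_set_imp_lmeasurable)
  have bnd: "measure lebesgue (\<Union>i\<in>C'. ball (fst i) (snd i)) \<le> \<delta> / 2" if C': "C' \<subseteq> C" "finite C'" for C'
  proof -
    have "measure lebesgue (\<Union>i\<in>C'. ball (fst i) (snd i)) \<le> (\<Sum>i\<in>C'. measure lebesgue (ball (fst i) (snd i)))"
      by (rule measure_UNION_le[OF C'(2)]) auto
    also have "\<dots> \<le> (\<Sum>i\<in>C'. (1/e) * measure lebesgue (ball (fst i) (snd i) - E))"
    proof (rule sum_mono)
      fix i assume "i \<in> C'"
      then have "i \<in> K" using C' C by auto
      then have "0 < snd i" "e * (2 * snd i) \<le> measure lebesgue (ball (fst i) (snd i) - E)"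
        unfolding K_def by auto
      moreover have "measure lebesgue (ball (fst i) (snd i)) = 2 * snd i"
        by (rule measure_ball_real) fact
      ultimately show "measure lebesgue (ball (fst i) (snd i)) \<le> (1/e) * measure lebesgue (ball (fst i) (snd i) - E)"
        using e by (simp add: field_simps)
    qed
    also have "\<dots> = (1/e) * measure lebesgue (\<Union>i\<in>C'. ball (fst i) (snd i) - E)"
    proof -
      have "measure lebesgue (\<Union>i\<in>C'. ball (fst i) (snd i) - E) = (\<Sum>i\<in>C'. measure lebesgue (ball (fst i) (snd i) - E))"
      proof (rule measure_finite_Union[OF C'(2)])
        show "(\<lambda>i. ball (fst i) (snd i) - E) ` C' \<subseteq> sets lebesgue" using E by auto
        show "disjoint_family_on (\<lambda>i. ball (fst i) (snd i) - E) C'"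
          using pw C' unfolding disjoint_family_on_def pairwise_def disjnt_def by blast
        show "emeasure lebesgue (ball (fst i) (snd i) - E) \<noteq> \<infinity>" for i
          using fmeasurableD2[OF fmeasurable_Diff[OF lmeasurable_ball E(1)]] by simp
      qed
      then show ?thesis by (simp add: sum_distrib_left)
    qed
    also have "\<dots> \<le> (1/e) * measure lebesgue (Op2 - E)"
    proof -
      have "ball (fst i) (snd i) \<subseteq> Op2" if "i \<in> C'" for i
        using that C' C by (cases i) (auto simp: K_def)
      then have "(\<Union>i\<in>C'. ball (fst i) (snd i) - E) \<subseteq> Op2 - E" by blast
      moreover have "(\<Union>i\<in>C'. ball (fst i) (snd i) - E) \<in> sets lebesgue"
        by (intro sets.finite_UN[OF C'(2)] sets.Diff fmeasurableD[OF lmeasurable_ball] E(1))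
      moreover have "Op2 - E \<in> fmeasurable lebesgue"
        using Op2 E by (intro bounded_set_imp_lmeasurable) (auto intro: bounded_subset)
      ultimately have "measure lebesgue (\<Union>i\<in>C'. ball (fst i) (snd i) - E) \<le> measure lebesgue (Op2 - E)"
        by (intro measure_mono_fmeasurable)
      then show ?thesis using e by (simp add: divide_right_mono)
    qed
    also have "\<dots> \<le> \<delta> / 2" using mO e by (simp add: field_simps)
    finally show ?thesis .
  qed
  have U: "(\<Union>i\<in>C. ball (fst i) (snd i)) \<in> fmeasurable lebesgue"
          "measure lebesgue (\<Union>i\<in>C. ball (fst i) (snd i)) \<le> \<delta> / 2"
    using fmeasurable_UN_bound[OF C(1) _ bnd] measure_UN_bound[OF C(1) _ bnd] Kball C(2) by auto
  define T where "T = (\<Union>i\<in>C. ball (fst i) (snd i)) \<union> (?S - (\<Union>i\<in>C. ball (fst i) (snd i)))"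
  have negl: "(?S - (\<Union>i\<in>C. ball (fst i) (snd i))) \<in> lmeasurable"
             "measure lebesgue (?S - (\<Union>i\<in>C. ball (fst i) (snd i))) = 0"
    using neg unfolding negligible_iff_measure by auto
  have "T \<in> lmeasurable" unfolding T_def using U(1) negl(1) by (rule fmeasurable.Un)
  moreover have "measure lebesgue T \<le> \<delta>"
  proof -
    have "measure lebesgue T \<le> measure lebesgue (\<Union>i\<in>C. ball (fst i) (snd i)) + measure lebesgue (?S - (\<Union>i\<in>C. ball (fst i) (snd i)))"
      unfolding T_def by (rule measure_Un_le) (use U(1) negl(1) in auto)
    then show ?thesis using U(2) negl(2) \<delta> by linarith
  qed
  moreover have "?S \<subseteq> T" unfolding T_def by blast
  ultimately show "\<exists>T. ?S \<subseteq> T \<and> T \<in> lmeasurable \<and> measure lebesgue T \<le> \<delta>" by blast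
qed

lemma density_ae:
  fixes E :: "real set"
  assumes E: "E \<in> sets lebesgue" "bounded E"
  shows "\<exists>N. negligible N \<and> (\<forall>x \<in> E - N. \<forall>e>0. \<exists>d>0. \<forall>r. 0 < r \<and> r < d \<longrightarrow> measure lebesgue (ball x r - E) < e * (2*r))"
proof -
  define S where "S n = {x \<in> E. \<forall>d>0. \<exists>r. 0 < r \<and> r < d \<and> (1/Suc n) * (2*r) \<le> measure lebesgue (ball x r - E)}" for n :: nat
  have "negligible (S n)" for n unfolding S_def by (rule density_bad_negligible[OF E]) simp
  then have N: "negligible (\<Union>n. S n)" by (rule negligible_Union_nat)
  have "\<exists>d>0. \<forall>r. 0 < r \<and> r < d \<longrightarrow> measure lebesgue (ball x r - E) < e * (2*r)"
    if x: "x \<in> E - (\<Union>n. S n)" and e: "e > 0" for x e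
  proof -
    obtain n where n: "1 / real (Suc n) < e" using e by (metis nat_approx_posE)
    have "x \<notin> S n" using x by auto
    then have "\<not> (\<forall>d>0. \<exists>r. 0 < r \<and> r < d \<and> (1/Suc n) * (2*r) \<le> measure lebesgue (ball x r - E))"
      using x unfolding S_def by blast
    then obtain d where d0: "d > 0" and d1: "\<And>r. 0 < r \<Longrightarrow> r < d \<Longrightarrow> \<not> (1/Suc n) * (2*r) \<le> measure lebesgue (ball x r - E)"
      by blast
    have d: "d > 0" "\<And>r. 0 < r \<Longrightarrow> r < d \<Longrightarrow> measure lebesgue (ball x r - E) < (1/Suc n) * (2*r)"
      using d0 d1 by (auto simp: not_le)
    show ?thesis
    proof (intro exI conjI allI impI)
      fix r assume r: "0 < r \<and> r < d"
      have "(1/Suc n) * (2*r) \<le> e * (2*r)" using n r by (intro mult_right_mono) auto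
      then show "measure lebesgue (ball x r - E) < e * (2*r)" using d(2)[of r] r by linarith
    qed (use d in auto)
  qed
  then show ?thesis using N by blast
qed

lemma stp_level_set: "{x::real. P \<lfloor>2^n * x\<rfloor>} \<in> sets lebesgue"
proof -
  have eq: "{x::real. P \<lfloor>2^n * x\<rfloor>} = (\<Union>i\<in>{i. P i}. {real_of_int i / 2^n ..< real_of_int (i+1) / 2^n})"
  proof (intro set_eqI iffI)
    fix x assume "x \<in> {x::real. P \<lfloor>2^n * x\<rfloor>}"
    moreover have "x \<in> {real_of_int \<lfloor>2^n * x\<rfloor> / 2^n ..< real_of_int (\<lfloor>2^n * x\<rfloor>+1) / 2^n}"
      by (simp add: field_simps) linarith
    ultimately show "x \<in> (\<Union>i\<in>{i. P i}. {real_of_int i / 2^n ..< real_of_int (i+1) / 2^n})" by blast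
  next
    fix x assume "x \<in> (\<Union>i\<in>{i. P i}. {real_of_int i / 2^n ..< real_of_int (i+1) / 2^n})"
    then obtain i where i: "P i" "real_of_int i / 2^n \<le> x" "x < real_of_int (i+1) / 2^n" by auto
    then have "real_of_int i \<le> 2^n * x" "2^n * x < real_of_int i + 1" by (auto simp: field_simps)
    then have "\<lfloor>2^n * x\<rfloor> = i" by linarith
    then show "x \<in> {x::real. P \<lfloor>2^n * x\<rfloor>}" using i by simp
  qed
  show ?thesis unfolding eq by (intro sets.countable_UN'') auto
qed

context approx
begin

lemma G0_sets: "G0 \<in> sets lebesgue"
  unfolding G0_def by (rule sets.Diff[OF _ negligible_imp_sets[OF N0_negligible]]) simp

lemma G0_bounded: "bounded G0" unfolding G0_def by (rule bounded_subset[of "{- real R..real R}"]) auto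

lemma f_F_bound:
  assumes "- real R \<le> s" "s \<le> t" "t \<le> real R"
  shows "(\<lambda>x. norm (F x)) integrable_on {s..t}" and "norm (f t - f s) \<le> integral {s..t} (\<lambda>x. norm (F x))"
proof -
  have i: "(\<lambda>x. norm (D k x)) integrable_on {s..t}" for k
  proof -
    have "(\<lambda>x. norm (D k x)) = stp (ns k) (\<lambda>i. norm (dq f (ns k) i))" by (rule ext) (simp add: D_def stp_def)
    then show ?thesis by (simp add: stp_integrable)
  qed
  have c: "isCont (\<lambda>y. norm y) y" for y :: 'a by (intro continuous_intros)
  have b: "norm y \<le> 1 \<Longrightarrow> \<bar>norm y\<bar> \<le> 1" for y :: 'a by simp
  have "- real R \<le> s" "t \<le> real R" using assms by auto
  note dd = dct[OF this, where \<Theta>="\<lambda>x y. norm y" and B=1, OF i c b]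
  show "(\<lambda>x. norm (F x)) integrable_on {s..t}" using dd(1) by simp
  have seq: "norm (f t - f s) \<le> integral {s..t} (\<lambda>x. norm (D k x)) + 4 / 2^ns k" for k
  proof -
    have e1: "norm (integral {s..t} (D k) - (f t - f s)) \<le> 4 / 2^ns k"
      unfolding D_def by (rule stp_dq_integral[OF L assms(2)])
    have i1: "D k integrable_on {s..t}" unfolding D_def by (rule stp_integrable)
    have e2: "norm (integral {s..t} (D k)) \<le> integral {s..t} (\<lambda>x. norm (D k x))"
      by (rule integral_norm_bound_integral[OF i1 i]) simp
    have "norm (f t - f s) \<le> norm (integral {s..t} (D k)) + norm (integral {s..t} (D k) - (f t - f s))"
      using norm_triangle_sub[of "f t - f s" "integral {s..t} (D k)"] by (simp add: norm_minus_commute)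
    then show ?thesis using e1 e2 by linarith
  qed
  have l2: "(\<lambda>k. integral {s..t} (\<lambda>x. norm (D k x)) + 4 / 2^ns k) \<longlonglongrightarrow> integral {s..t} (\<lambda>x. norm (F x)) + 0"
  proof (rule tendsto_add)
    show "(\<lambda>k. integral {s..t} (\<lambda>x. norm (D k x))) \<longlonglongrightarrow> integral {s..t} (\<lambda>x. norm (F x))"
      using dd(2) by simp
    have "(\<lambda>k. 4 * (1/2::real)^k) \<longlonglongrightarrow> 4 * 0"
      by (intro tendsto_mult tendsto_const LIMSEQ_power_zero) auto
    then have l0: "(\<lambda>k. 4 * (1/2::real)^k) \<longlonglongrightarrow> 0" by simp
    have b: "norm (4 / 2^ns k :: real) \<le> 4 * (1/2)^k" for k
    proof -
      have "k \<le> ns k" using ns(1) by (rule strict_mono_imp_increasing)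
      then have "(2::real)^k \<le> 2^ns k" by (simp add: power_increasing)
      then show ?thesis by (simp add: field_simps power_one_over)
    qed
    show "(\<lambda>k. 4 / 2^ns k :: real) \<longlonglongrightarrow> 0"
      by (rule Lim_null_comparison[OF always_eventually[OF allI[OF b]] l0])
  qed
  show "norm (f t - f s) \<le> integral {s..t} (\<lambda>x. norm (F x))"
    using LIMSEQ_le_const[OF l2] seq by simp
qed

end

context approx_rho
begin

definition Ev :: "'a \<Rightarrow> real \<Rightarrow> real set" where
  "Ev v q = {x \<in> G0. norm (\<rho> (F x) - v) < q}"

lemma Ev_eq:
  "Ev v q = G0 \<inter> (\<Union>p::nat. \<Union>N. \<Inter>k\<in>{N..}. {x. norm (\<rho> (D k x) - v) < q - 1/Suc p})"
proof (intro set_eqI iffI)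
  fix x assume x: "x \<in> Ev v q"
  then have xG: "x \<in> G0" and lt: "norm (\<rho> (F x) - v) < q" by (auto simp: Ev_def)
  define \<delta> where "\<delta> = q - norm (\<rho> (F x) - v)"
  have \<delta>: "\<delta> > 0" using lt by (simp add: \<delta>_def)
  obtain p :: nat where p: "1 / Suc p < \<delta>/2" using \<delta> by (metis half_gt_zero nat_approx_posE)
  have "(\<lambda>k. \<rho> (D k x)) \<longlonglongrightarrow> \<rho> (F x)" by (rule isCont_tendsto_compose[OF rho_cont D_conv[OF xG]])
  then obtain N where N: "\<And>k. k \<ge> N \<Longrightarrow> dist (\<rho> (D k x)) (\<rho> (F x)) < \<delta>/2"
    using \<delta> unfolding LIMSEQ_def by (meson half_gt_zero)
  have "norm (\<rho> (D k x) - v) < q - 1/Suc p" if "k \<ge> N" for k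
  proof -
    have "norm (\<rho> (D k x) - v) \<le> norm (\<rho> (D k x) - \<rho> (F x)) + norm (\<rho> (F x) - v)"
      using norm_triangle_ineq[of "\<rho> (D k x) - \<rho> (F x)" "\<rho> (F x) - v"] by simp
    moreover have "norm (\<rho> (D k x) - \<rho> (F x)) < \<delta>/2" using N[OF that] by (simp add: dist_norm)
    ultimately show ?thesis using p unfolding \<delta>_def by argo
  qed
  then show "x \<in> G0 \<inter> (\<Union>p::nat. \<Union>N. \<Inter>k\<in>{N..}. {x. norm (\<rho> (D k x) - v) < q - 1/Suc p})"
    using xG by blast
next
  fix x assume "x \<in> G0 \<inter> (\<Union>p::nat. \<Union>N. \<Inter>k\<in>{N..}. {x. norm (\<rho> (D k x) - v) < q - 1/Suc p})"
  then obtain p N where xG: "x \<in> G0" and b: "\<And>k. k \<ge> N \<Longrightarrow> norm (\<rho> (D k x) - v) < q - 1/Suc p"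
    by auto
  have "(\<lambda>k. norm (\<rho> (D k x) - v)) \<longlonglongrightarrow> norm (\<rho> (F x) - v)"
    by (intro tendsto_norm tendsto_diff tendsto_const isCont_tendsto_compose[OF rho_cont D_conv[OF xG]])
  then have "norm (\<rho> (F x) - v) \<le> q - 1/Suc p"
    by (rule LIMSEQ_le_const2) (use b less_imp_le in blast)
  moreover have "1 / real (Suc p) > 0" by simp
  ultimately have "norm (\<rho> (F x) - v) < q" by argo
  then show "x \<in> Ev v q" using xG unfolding Ev_def by simp
qed

lemma Ev_sets: "Ev v q \<in> sets lebesgue"
proof -
  have s: "{x. norm (\<rho> (D k x) - v) < c} \<in> sets lebesgue" for k c
  proof -
    have "{x. norm (\<rho> (D k x) - v) < c} = {x. (\<lambda>i. norm (\<rho> (dq f (ns k) i) - v) < c) \<lfloor>2^ns k * x\<rfloor>}"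
      by (simp add: D_def stp_def)
    then show ?thesis using stp_level_set by simp
  qed
  have i: "(\<Inter>k\<in>{N..}. {x. norm (\<rho> (D k x) - v) < q - 1/Suc p}) \<in> sets lebesgue" for N p
  proof (rule sets.countable_INT'')
    show "countable {N..}" by simp
    show "{x. norm (\<rho> (D k x) - v) < q - 1/Suc p} \<in> sets lebesgue" for k by (rule s)
  qed simp
  have u1: "(\<Union>N. \<Inter>k\<in>{N..}. {x. norm (\<rho> (D k x) - v) < q - 1/Suc p}) \<in> sets lebesgue" for p
  proof (rule sets.countable_UN'')
    show "countable (UNIV::nat set)" by simp
    show "(\<Inter>k\<in>{N..}. {x. norm (\<rho> (D k x) - v) < q - 1/Suc p}) \<in> sets lebesgue" for N by (rule i)
  qed
  have u2: "(\<Union>p::nat. \<Union>N. \<Inter>k\<in>{N..}. {x. norm (\<rho> (D k x) - v) < q - 1/Suc p}) \<in> sets lebesgue"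
  proof (rule sets.countable_UN'')
    show "countable (UNIV::nat set)" by simp
    show "(\<Union>N. \<Inter>k\<in>{N..}. {x. norm (\<rho> (D k x) - v) < q - 1/Suc p}) \<in> sets lebesgue" for p by (rule u1)
  qed
  show ?thesis unfolding Ev_eq by (rule sets.Int[OF G0_sets u2])
qed

lemma Ev_bounded: "bounded (Ev v q)"
  using G0_bounded by (rule bounded_subset) (auto simp: Ev_def)

definition Leb :: "real \<Rightarrow> bool" where
  "Leb t0 \<longleftrightarrow> (\<forall>e>0. \<exists>d>0. \<forall>r. 0 < r \<and> r < d \<longrightarrow>
      measure lebesgue (ball t0 r - {x \<in> G0. norm (\<rho> (F x) - \<rho> (F t0)) < e}) < e * (2*r))"

lemma Nall_exists: "\<exists>N. negligible N \<and> (\<forall>t0 \<in> G0 - N. Leb t0)"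
proof -
  have cK: "compact (\<rho> ` closure (slopes f))"
    by (rule compact_continuous_image[OF continuous_at_imp_continuous_on Kc]) (use rho_cont in auto)
  have "\<forall>n::nat. \<exists>V. finite V \<and> \<rho> ` closure (slopes f) \<subseteq> (\<Union>v\<in>V. ball v (1/Suc n))"
    using cK unfolding compact_eq_totally_bounded by simp
  then obtain V where V: "\<And>n. finite (V n)" "\<And>n. \<rho> ` closure (slopes f) \<subseteq> (\<Union>v\<in>V n. ball v (1/Suc n))"
    by metis
  have "\<forall>n v. \<exists>N. negligible N \<and> (\<forall>x \<in> Ev v (1/Suc n) - N. \<forall>e>0. \<exists>d>0. \<forall>r. 0 < r \<and> r < d \<longrightarrow>
           measure lebesgue (ball x r - Ev v (1/Suc n)) < e * (2*r))"
    using density_ae[OF Ev_sets Ev_bounded] by blast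
  then obtain NN where NN: "\<And>n v. negligible (NN n v)"
    "\<And>n v x e. x \<in> Ev v (1/Suc n) - NN n v \<Longrightarrow> e > 0 \<Longrightarrow> \<exists>d>0. \<forall>r. 0 < r \<and> r < d \<longrightarrow>
           measure lebesgue (ball x r - Ev v (1/Suc n)) < e * (2*r)"
    by metis
  define N where "N = (\<Union>n. \<Union>v\<in>V n. NN n v)"
  have negN: "negligible N"
    unfolding N_def by (intro negligible_Union_nat negligible_Union) (auto simp: V(1) NN(1))
  have "Leb t0" if t0: "t0 \<in> G0 - N" for t0
    unfolding Leb_def
  proof (intro allI impI)
    fix e :: real assume e: "e > 0"
    obtain n :: nat where n: "1 / Suc n < e/2" using e by (metis half_gt_zero nat_approx_posE)
    have "\<rho> (F t0) \<in> \<rho> ` closure (slopes f)" by (intro imageI F_mem) (use t0 in blast)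
    then have "\<rho> (F t0) \<in> (\<Union>v\<in>V n. ball v (1/Suc n))" using V(2)[of n] by (rule subsetD[rotated])
    then obtain v where v1: "v \<in> V n" and v2: "\<rho> (F t0) \<in> ball v (1/Suc n)" by (rule UN_E)
    have v: "v \<in> V n" "dist v (\<rho> (F t0)) < 1/Suc n" using v1 v2 by (simp_all only: mem_ball)
    have t0G: "t0 \<in> G0" using t0 by blast
    have "norm (\<rho> (F t0) - v) < 1/Suc n" using v(2) by (simp add: dist_norm norm_minus_commute)
    then have t0E: "t0 \<in> Ev v (1/Suc n)" using t0G unfolding Ev_def by blast
    have "t0 \<notin> NN n v" using t0 v unfolding N_def by blast
    then obtain d where d: "d > 0" "\<And>r. 0 < r \<Longrightarrow> r < d \<Longrightarrow> measure lebesgue (ball t0 r - Ev v (1/Suc n)) < e * (2*r)"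
      using NN(2)[of t0 v n e] t0E e by auto
    have sub: "Ev v (1/Suc n) \<subseteq> {x \<in> G0. norm (\<rho> (F x) - \<rho> (F t0)) < e}"
    proof
      fix x assume "x \<in> Ev v (1/Suc n)"
      then have "x \<in> G0" "norm (\<rho> (F x) - v) < 1/Suc n" by (auto simp: Ev_def)
      moreover have "norm (\<rho> (F x) - \<rho> (F t0)) \<le> norm (\<rho> (F x) - v) + norm (v - \<rho> (F t0))"
        using norm_triangle_ineq[of "\<rho> (F x) - v" "v - \<rho> (F t0)"] by simp
      ultimately show "x \<in> {x \<in> G0. norm (\<rho> (F x) - \<rho> (F t0)) < e}"
        using v(2) n by (auto simp: dist_norm)
    qed
    show "\<exists>d>0. \<forall>r. 0 < r \<and> r < d \<longrightarrow> measure lebesgue (ball t0 r - {x \<in> G0. norm (\<rho> (F x) - \<rho> (F t0)) < e}) < e * (2*r)"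
    proof (intro exI conjI allI impI)
      fix r assume r: "0 < r \<and> r < d"
      have "measure lebesgue (ball t0 r - {x \<in> G0. norm (\<rho> (F x) - \<rho> (F t0)) < e}) \<le> measure lebesgue (ball t0 r - Ev v (1/Suc n))"
      proof (rule measure_mono_fmeasurable)
        show "ball t0 r - {x \<in> G0. norm (\<rho> (F x) - \<rho> (F t0)) < e} \<subseteq> ball t0 r - Ev v (1/Suc n)"
          using sub by blast
        have "{x \<in> G0. norm (\<rho> (F x) - \<rho> (F t0)) < e} = Ev (\<rho> (F t0)) e" by (simp add: Ev_def)
        then show "ball t0 r - {x \<in> G0. norm (\<rho> (F x) - \<rho> (F t0)) < e} \<in> sets lebesgue"
          using fmeasurableD[OF fmeasurable_Diff[OF lmeasurable_ball Ev_sets]] by simp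
        show "ball t0 r - Ev v (1/Suc n) \<in> fmeasurable lebesgue"
          by (rule fmeasurable_Diff[OF lmeasurable_ball Ev_sets])
      qed
      then show "measure lebesgue (ball t0 r - {x \<in> G0. norm (\<rho> (F x) - \<rho> (F t0)) < e}) < e * (2*r)"
        using d(2)[of r] r by linarith
    qed (use d in auto)
  qed
  then show ?thesis using negN by blast
qed

end

context approx_rho
begin

lemma int_bound:
  assumes st: "- real R \<le> s" "s \<le> t" "t \<le> real R" and sub: "{s..t} \<subseteq> ball t0 r"
    and w: "norm w \<le> 1" and e: "e > 0"
  shows "integral {s..t} (\<lambda>x. norm (\<rho> (F x) - w)) \<le> e * (t - s) + 2 * measure lebesgue (ball t0 r - {x \<in> G0. norm (\<rho> (F x) - w) < e})"
proof -
  define A where "A = {x \<in> G0. norm (\<rho> (F x) - w) < e}"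
  have A: "A = Ev w e" unfolding A_def Ev_def ..
  have BA: "ball t0 r - A \<in> fmeasurable lebesgue" unfolding A by (rule fmeasurable_Diff[OF lmeasurable_ball Ev_sets])
  have BAI: "(ball t0 r - A) \<inter> {s..t} \<in> lmeasurable"
    by (rule fmeasurable_Int_fmeasurable[OF BA]) simp
  have i2: "indicat_real (ball t0 r - A) integrable_on {s..t}"
    using BAI by (simp add: integrable_on_indicator)
  have i3: "(\<lambda>x. 2 * indicat_real (ball t0 r - A) x) integrable_on {s..t}"
    using integrable_cmul[OF i2, of 2] by simp
  have "integral {s..t} (\<lambda>x. norm (\<rho> (F x) - w)) \<le> integral {s..t} (\<lambda>x. e + 2 * indicat_real (ball t0 r - A) x)"
  proof (rule integral_le)
    show "(\<lambda>x. norm (\<rho> (F x) - w)) integrable_on {s..t}" by (rule gam_deriv_bound(1)[OF st])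
    show "(\<lambda>x. e + 2 * indicat_real (ball t0 r - A) x) integrable_on {s..t}"
      by (intro integrable_add integrable_const_ivl i3)
    fix x assume x: "x \<in> {s..t}"
    show "norm (\<rho> (F x) - w) \<le> e + 2 * indicat_real (ball t0 r - A) x"
    proof (cases "x \<in> A")
      case True
      then show ?thesis unfolding A_def by (simp add: indicator_def)
    next
      case False
      then have "x \<in> ball t0 r - A" using x sub by blast
      moreover have "norm (\<rho> (F x) - w) \<le> 2"
        using norm_triangle_ineq4[of "\<rho> (F x)" w] rho_norm[of "F x"] w by linarith
      ultimately show ?thesis using e by simp
    qed
  qed
  also have "\<dots> = e * (t - s) + 2 * measure lebesgue ((ball t0 r - A) \<inter> {s..t})"
  proof -
    have "integral {s..t} (\<lambda>x. e + 2 * indicat_real (ball t0 r - A) x) = integral {s..t} (\<lambda>x. e) + integral {s..t} (\<lambda>x. 2 * indicat_real (ball t0 r - A) x)"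
      by (rule integral_add[OF integrable_const_ivl i3])
    also have "integral {s..t} (\<lambda>x. 2 * indicat_real (ball t0 r - A) x) = 2 * integral {s..t} (indicat_real (ball t0 r - A))"
      by (rule integral_mult_right)
    also have "integral {s..t} (indicat_real (ball t0 r - A)) = measure lebesgue ((ball t0 r - A) \<inter> {s..t})"
      by (rule integral_indicator[OF BAI])
    finally show ?thesis using st by simp
  qed
  also have "\<dots> \<le> e * (t - s) + 2 * measure lebesgue (ball t0 r - A)"
  proof -
    have "measure lebesgue ((ball t0 r - A) \<inter> {s..t}) \<le> measure lebesgue (ball t0 r - A)"
      by (rule measure_mono_fmeasurable[OF _ fmeasurableD[OF BAI] BA]) blast
    then show ?thesis by simp
  qed
  finally show ?thesis unfolding A_def .
qed

lemma gam_deriv: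
  assumes t0: "t0 \<in> G0" "- real R < t0" "t0 < real R" and Lt: "Leb t0"
  shows "(gam has_vector_derivative \<rho> (F t0)) (at t0)"
  unfolding has_vector_derivative_def has_derivative_at_alt
proof (intro conjI allI impI)
  show "bounded_linear (\<lambda>x. x *\<^sub>R \<rho> (F t0))" by (rule bounded_linear_scaleR_left)
  fix e :: real assume e: "e > 0"
  define w where "w = \<rho> (F t0)"
  have w: "norm w \<le> 1" unfolding w_def by (rule rho_norm)
  define e' where "e' = e / 9"
  have e': "e' > 0" using e by (simp add: e'_def)
  obtain d1 where d1: "d1 > 0" "\<And>r. 0 < r \<Longrightarrow> r < d1 \<Longrightarrow> measure lebesgue (ball t0 r - {x \<in> G0. norm (\<rho> (F x) - w) < e'}) < e' * (2*r)"
    using Lt e' unfolding Leb_def w_def by blast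
  define d where "d = min (d1/2) (min (real R - t0) (t0 + real R))"
  have d: "d > 0" using d1 t0 by (simp add: d_def)
  have main: "norm ((gam t - gam s) - (t - s) *\<^sub>R w) \<le> e * (t - s)"
    if st: "s \<le> t" "t0 = s \<or> t0 = t" "t - s < d" for s t
  proof (cases "s = t")
    case True then show ?thesis by simp
  next
    case False
    then have st': "s < t" using st by simp
    define r where "r = 2 * (t - s)"
    have r: "0 < r" "r < d1" using st' st(3) d unfolding r_def d_def by auto
    have rng: "- real R \<le> s" "t \<le> real R" using st t0 unfolding d_def by auto
    have sub: "{s..t} \<subseteq> ball t0 r"
      using st(2) st' unfolding r_def by (auto simp: dist_real_def)
    have "norm ((gam t - gam s) - (t - s) *\<^sub>R w) \<le> integral {s..t} (\<lambda>x. norm (\<rho> (F x) - w))"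
      by (rule gam_deriv_bound(2)[OF rng(1) st(1) rng(2)])
    also have "\<dots> \<le> e' * (t - s) + 2 * measure lebesgue (ball t0 r - {x \<in> G0. norm (\<rho> (F x) - w) < e'})"
      by (rule int_bound[OF rng(1) st(1) rng(2) sub w e'])
    also have "\<dots> \<le> e' * (t - s) + 2 * (e' * (2 * r))"
      using d1(2)[OF r] by simp
    also have "\<dots> = e * (t - s)" unfolding r_def e'_def by (simp add: field_simps)
    finally show ?thesis .
  qed
  show "\<exists>d>0. \<forall>y. norm (y - t0) < d \<longrightarrow> norm (gam y - gam t0 - (y - t0) *\<^sub>R \<rho> (F t0)) \<le> e * norm (y - t0)"
  proof (intro exI conjI allI impI)
    show "d > 0" by (rule d)
    fix y assume y: "norm (y - t0) < d"
    show "norm (gam y - gam t0 - (y - t0) *\<^sub>R \<rho> (F t0)) \<le> e * norm (y - t0)"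
    proof (cases "t0 \<le> y")
      case True
      then show ?thesis using main[of t0 y] y unfolding w_def by simp
    next
      case False
      have "norm (gam y - gam t0 - (y - t0) *\<^sub>R \<rho> (F t0)) = norm ((gam t0 - gam y) - (t0 - y) *\<^sub>R w)"
        unfolding w_def by (metis (no_types, lifting) minus_diff_eq norm_minus_cancel scaleR_minus_left minus_diff_minus)
      also have "\<dots> \<le> e * (t0 - y)" using main[of y t0] y False by simp
      finally show ?thesis using False by simp
    qed
  qed
qed

end

lemma slope_split:
  fixes h :: "real \<Rightarrow> 'a::real_normed_vector"
  assumes Q: "convex Q" and smt: "s < m" "m < t"
    and P1: "(1/(m-s)) *\<^sub>R (h m - h s) \<in> Q" and P2: "(1/(t-m)) *\<^sub>R (h t - h m) \<in> Q"
  shows "(1/(t-s)) *\<^sub>R (h t - h s) \<in> Q"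
proof -
  define lam where "lam = (m - s) / (t - s)"
  have l01: "0 \<le> lam" "0 \<le> 1 - lam" using smt unfolding lam_def by (auto simp: field_simps)
  have c1: "lam * (1/(m-s)) = 1/(t-s)" using smt unfolding lam_def by (simp add: field_simps)
  have e1: "lam *\<^sub>R ((1/(m-s)) *\<^sub>R (h m - h s)) = (1/(t-s)) *\<^sub>R (h m - h s)"
    by (simp only: scaleR_scaleR c1)
  have "1 - lam = (t - m) / (t - s)" unfolding lam_def using smt by (simp add: field_simps)
  then have c2: "(1 - lam) * (1/(t-m)) = 1/(t-s)" using smt by (simp add: field_simps)
  have e2: "(1 - lam) *\<^sub>R ((1/(t-m)) *\<^sub>R (h t - h m)) = (1/(t-s)) *\<^sub>R (h t - h m)"
    by (simp only: scaleR_scaleR c2)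
  have "lam *\<^sub>R ((1/(m-s)) *\<^sub>R (h m - h s)) + (1 - lam) *\<^sub>R ((1/(t-m)) *\<^sub>R (h t - h m)) \<in> Q"
    by (rule convexD[OF Q P1 P2 l01]) simp
  also have "lam *\<^sub>R ((1/(m-s)) *\<^sub>R (h m - h s)) + (1 - lam) *\<^sub>R ((1/(t-m)) *\<^sub>R (h t - h m)) = (1/(t-s)) *\<^sub>R (h t - h s)"
    unfolding e1 e2 by (simp add: algebra_simps flip: scaleR_right_distrib)
  finally show ?thesis .
qed

lemma slope_chain:
  fixes h :: "real \<Rightarrow> 'a::real_normed_vector"
  assumes Q: "convex Q" and ab: "a \<le> b"
    and P: "\<And>s t. s < t \<Longrightarrow> (t \<le> a \<or> (a \<le> s \<and> t \<le> b) \<or> b \<le> s) \<Longrightarrow> (1/(t-s)) *\<^sub>R (h t - h s) \<in> Q"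
  shows "\<And>s t. s < t \<Longrightarrow> (1/(t-s)) *\<^sub>R (h t - h s) \<in> Q"
proof -
  have A: "(1/(t-s)) *\<^sub>R (h t - h s) \<in> Q" if "a \<le> s" "s < t" for s t
  proof (cases "t \<le> b \<or> b \<le> s")
    case True then show ?thesis using P that by blast
  next
    case False
    then have "s < b" "b < t" by auto
    then show ?thesis using slope_split[OF Q \<open>s < b\<close> \<open>b < t\<close>] P[of s b] P[of b t] that by auto
  qed
  fix s t :: real assume st: "s < t"
  show "(1/(t-s)) *\<^sub>R (h t - h s) \<in> Q"
  proof (cases "a \<le> s \<or> t \<le> a")
    case True then show ?thesis using A P st by blast
  next
    case False
    then have "s < a" "a < t" by auto
    then show ?thesis using slope_split[OF Q \<open>s < a\<close> \<open>a < t\<close>] P[of s a] A[of a t] by auto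
  qed
qed

lemma compact_closure_convex_hull:
  fixes C :: "'a::banach set"
  assumes C: "compact C"
  shows "compact (closure (convex hull C))"
  unfolding compact_eq_totally_bounded
proof (intro conjI allI impI)
  show "complete (closure (convex hull C))" by (simp add: complete_eq_closed)
  fix e :: real assume e: "e > 0"
  obtain N where N: "finite N" "C \<subseteq> (\<Union>x\<in>N. ball x (e/4))"
    using C e unfolding compact_eq_totally_bounded by (meson divide_pos_pos zero_less_numeral)
  have "compact (convex hull N)" by (rule finite_imp_compact_convex_hull[OF N(1)])
  then obtain M where M: "finite M" "convex hull N \<subseteq> (\<Union>x\<in>M. ball x (e/4))"
    using e unfolding compact_eq_totally_bounded by (meson divide_pos_pos zero_less_numeral)
  have "closure (convex hull C) \<subseteq> (\<Union>x\<in>M. ball x e)"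
  proof
    fix y assume "y \<in> closure (convex hull C)"
    then have "\<forall>e>0. \<exists>y'\<in>convex hull C. dist y' y < e" by (simp add: closure_approachable)
    then obtain y' where y'1: "y' \<in> convex hull C" "dist y' y < e/4" using e by (meson divide_pos_pos zero_less_numeral)
    then have y': "y' \<in> convex hull C" "dist y y' < e/4" by (simp_all add: dist_commute)
    then obtain S u where S: "finite S" "S \<subseteq> C" "\<forall>x\<in>S. 0 \<le> u x" "sum u S = 1" "(\<Sum>v\<in>S. u v *\<^sub>R v) = y'"
      unfolding convex_hull_explicit by blast
    have "\<forall>c\<in>S. \<exists>n\<in>N. dist n c < e/4" using S(2) N(2) by fastforce
    then obtain nn where nn: "\<And>c. c \<in> S \<Longrightarrow> nn c \<in> N \<and> dist (nn c) c < e/4" by metis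
    define z where "z = (\<Sum>v\<in>S. u v *\<^sub>R nn v)"
    have z: "z \<in> convex hull N"
      unfolding z_def by (rule convex_sum[OF S(1) convex_convex_hull S(4)]) (use S(3) nn in \<open>auto intro: hull_inc\<close>)
    have "dist y' z = norm (\<Sum>v\<in>S. u v *\<^sub>R (v - nn v))"
      unfolding z_def S(5)[symmetric] dist_norm by (simp add: sum_subtractf scaleR_diff_right)
    also have "\<dots> \<le> (\<Sum>v\<in>S. u v * norm (v - nn v))"
      using norm_sum[of "\<lambda>v. u v *\<^sub>R (v - nn v)" S] S(3) by simp
    also have "\<dots> \<le> (\<Sum>v\<in>S. u v * (e/4))"
    proof (rule sum_mono)
      fix v assume v: "v \<in> S"
      have "norm (v - nn v) \<le> e/4" using nn[OF v] by (simp add: dist_norm norm_minus_commute)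
      moreover have "0 \<le> u v" using S(3) v by blast
      ultimately show "u v * norm (v - nn v) \<le> u v * (e/4)" by (rule mult_left_mono)
    qed
    also have "\<dots> = (\<Sum>v\<in>S. u v) * (e/4)" by (rule sum_distrib_right[symmetric])
    also have "\<dots> = e/4" using S(4) by simp
    finally have yz: "dist y' z \<le> e/4" .
    have "z \<in> (\<Union>x\<in>M. ball x (e/4))" using M(2) z by (rule subsetD)
    then obtain m where m1: "m \<in> M" and m2: "z \<in> ball m (e/4)" by (rule UN_E)
    have m: "m \<in> M" "dist m z < e/4" using m1 m2 by (simp_all only: mem_ball)
    have "dist y m \<le> dist y y' + dist y' z + dist z m"
      using dist_triangle[of y m y'] dist_triangle[of y' m z] by linarith
    then have "dist y m < e" using y'(2) yz m(2) dist_commute[of m z] e by linarith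
    then have "dist m y < e" by (simp add: dist_commute)
    then show "y \<in> (\<Union>x\<in>M. ball x e)" using m(1) by auto
  qed
  then show "\<exists>k. finite k \<and> closure (convex hull C) \<subseteq> (\<Union>x\<in>k. ball x e)" using M(1) by blast
qed

lemma lip_norm_le:
  fixes g :: "real \<Rightarrow> 'a::real_normed_vector"
  assumes "\<And>s t. norm (g s - g t) \<le> L * \<bar>s - t\<bar>"
  shows "lip_norm g \<le> L"
  unfolding lip_norm_def
proof (rule cSUP_least)
  have "(0::real, 1::real) \<in> {(s, t). s \<noteq> t}" by simp
  then show "{(s, t). s \<noteq> t} \<noteq> ({}::(real\<times>real) set)" by blast
  fix p :: "real \<times> real" assume "p \<in> {(s, t). s \<noteq> t}"
  then have "\<bar>fst p - snd p\<bar> > 0" by auto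
  then show "norm (g (fst p) - g (snd p)) / \<bar>fst p - snd p\<bar> \<le> L"
    using assms[of "fst p" "snd p"] by (simp add: divide_le_eq)
qed

lemma lip_norm_upper:
  fixes g :: "real \<Rightarrow> 'a::real_normed_vector"
  assumes L: "\<And>s t. norm (g s - g t) \<le> L * \<bar>s - t\<bar>" and st: "s \<noteq> t"
  shows "norm (g s - g t) / \<bar>s - t\<bar> \<le> lip_norm g"
  unfolding lip_norm_def
proof -
  have "bdd_above ((\<lambda>p. norm (g (fst p) - g (snd p)) / \<bar>fst p - snd p\<bar>) ` {(s, t). s \<noteq> t})"
  proof (rule bdd_aboveI2)
    fix p :: "real \<times> real" assume "p \<in> {(s, t). s \<noteq> t}"
    then have "\<bar>fst p - snd p\<bar> > 0" by auto
    then show "norm (g (fst p) - g (snd p)) / \<bar>fst p - snd p\<bar> \<le> L"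
      using L[of "fst p" "snd p"] by (simp add: divide_le_eq)
  qed
  from cSUP_upper[OF _ this, of "(s,t)"] st
  show "norm (g s - g t) / \<bar>s - t\<bar> \<le> (SUP p\<in>{(s, t). s \<noteq> t}. norm (g (fst p) - g (snd p)) / \<bar>fst p - snd p\<bar>)"
    by simp
qed

lemma lip_norm_deriv:
  fixes g :: "real \<Rightarrow> 'a::real_normed_vector"
  assumes L: "\<And>s t. norm (g s - g t) \<le> L * \<bar>s - t\<bar>" and d: "(g has_vector_derivative v) (at t0)"
  shows "norm v \<le> lip_norm g"
proof (rule field_le_epsilon)
  fix e :: real assume e: "e > 0"
  from d have "\<exists>d>0. \<forall>y. norm (y - t0) < d \<longrightarrow> norm (g y - g t0 - (y - t0) *\<^sub>R v) \<le> e * norm (y - t0)"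
    unfolding has_vector_derivative_def has_derivative_at_alt using e by blast
  then obtain d where d: "d > 0" "\<And>y. norm (y - t0) < d \<Longrightarrow> norm (g y - g t0 - (y - t0) *\<^sub>R v) \<le> e * norm (y - t0)"
    by blast
  define y where "y = t0 + d/2"
  have h: "y - t0 = d/2" "norm (y - t0) < d" using d by (auto simp: y_def)
  have "norm ((y - t0) *\<^sub>R v) \<le> norm (g y - g t0) + norm (g y - g t0 - (y - t0) *\<^sub>R v)"
    by (metis norm_minus_commute norm_triangle_sub add.commute)
  then have "(d/2) * norm v \<le> norm (g y - g t0) + e * (d/2)"
    using d(2)[OF h(2)] h(1) d(1) by simp
  moreover have "norm (g y - g t0) / \<bar>y - t0\<bar> \<le> lip_norm g"
    by (rule lip_norm_upper[OF L]) (use h d in auto)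
  ultimately have "(d/2) * norm v \<le> (d/2) * lip_norm g + e * (d/2)"
    using h d(1) by (simp add: divide_le_eq mult.commute)
  then have "(d/2) * norm v \<le> (d/2) * (lip_norm g + e)" by (simp add: algebra_simps)
  then show "norm v \<le> lip_norm g + e" using d(1) by simp
qed

lemma slope_sym: "(g s - g t) /\<^sub>R (s - t) = (1/(t-s)) *\<^sub>R (g t - (g s :: 'a::real_normed_vector))"
proof -
  have 1: "s - t = -(t - s)" by simp
  have 2: "g s - g t = -(g t - g s)" by simp
  show ?thesis
    by (simp only: 1 2 inverse_minus_eq scaleR_minus_left scaleR_minus_right minus_minus inverse_eq_divide divide_minus_right)
qed

context approx_rho
begin

lemma final_construct:
  assumes f0: "f 0 = 0" and t: "- real R < t1" "t2 < real R" "t0 \<in> {t1..t2}"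
    and t0G: "t0 \<in> G0" and Lt: "Leb t0" and n1: "norm (\<rho> (F t0)) = 1" and ke: "\<kappa> < \<epsilon>"
  shows "\<exists>g \<in> Lip0K. lip_norm g = 1 \<and>
           (\<exists>t0 \<in> {t1..t2}. \<exists>v. (g has_vector_derivative v) (at t0) \<and> norm v = 1) \<and>
           lip_norm (\<lambda>x. f x - g x) < \<epsilon>"
proof -
  define cl where "cl t = max (- real R) (min (real R) t)" for t
  define g where "g t = gam (cl t) - gam 0 + (f t - f (cl t))" for t
  have Rp: "real R > 0" using Rpos by simp
  have cl_in: "t \<in> {- real R..real R} \<Longrightarrow> cl t = t" for t unfolding cl_def by auto
  have cl_rng: "- real R \<le> cl t" "cl t \<le> real R" for t unfolding cl_def using Rp by auto
  have cl_lip: "\<bar>cl s - cl t\<bar> \<le> \<bar>s - t\<bar>" for s t unfolding cl_def by auto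
  have cl_mono: "s \<le> t \<Longrightarrow> cl s \<le> cl t" for s t unfolding cl_def by auto
  have g0: "g 0 = 0" unfolding g_def using cl_in[of 0] Rp by simp
  define Kc where "Kc = closure (slopes f)"
  define Q2 where "Q2 = closure (convex hull (Kc \<union> \<rho> ` Kc))"
  have cKc: "compact Kc" unfolding Kc_def by (rule Kc)
  have cQ2: "compact Q2" unfolding Q2_def
    by (intro compact_closure_convex_hull compact_Un cKc compact_continuous_image continuous_at_imp_continuous_on)
       (use rho_cont in auto)
  define Q where "Q = cball 0 1 \<inter> Q2"
  have convQ: "convex Q" unfolding Q_def Q2_def by (intro convex_Int convex_cball convex_closure convex_convex_hull)
  have slopeQ: "(1/(t-s)) *\<^sub>R (g t - g s) \<in> Q" if st: "s < t" for s t
  proof (rule slope_chain[OF convQ _ _ st, of "- real R" "real R"])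
    show "- real R \<le> real R" by simp
    fix s t :: real assume st: "s < t" and reg: "t \<le> - real R \<or> (- real R \<le> s \<and> t \<le> real R) \<or> real R \<le> s"
    have fslope: "(1/(t-s)) *\<^sub>R (f t - f s) \<in> Q"
    proof -
      have "(1/(t-s)) *\<^sub>R (f t - f s) = (f t - f s) /\<^sub>R (t - s)" by (simp add: inverse_eq_divide)
      moreover have "(f t - f s) /\<^sub>R (t - s) \<in> slopes f" unfolding slopes_def using st by auto
      moreover have "slopes f \<subseteq> Q2"
        unfolding Q2_def Kc_def using closure_subset[of "slopes f"] closure_subset[of "convex hull (closure (slopes f) \<union> \<rho> ` closure (slopes f))"]
          hull_subset[of "closure (slopes f) \<union> \<rho> ` closure (slopes f)" convex] by blast
      ultimately have "(1/(t-s)) *\<^sub>R (f t - f s) \<in> Q2" by (metis subsetD)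
      moreover have "norm ((1/(t-s)) *\<^sub>R (f t - f s)) \<le> 1"
        using L[of t s] st by (simp add: divide_le_eq)
      ultimately show ?thesis unfolding Q_def by simp
    qed
    show "(1/(t-s)) *\<^sub>R (g t - g s) \<in> Q"
    proof (cases "t \<le> - real R \<or> real R \<le> s")
      case True
      then have "cl s = cl t" unfolding cl_def using st by auto
      then have "g t - g s = f t - f s" unfolding g_def by simp
      then show ?thesis using fslope by simp
    next
      case False
      then have in1: "- real R \<le> s" "t \<le> real R" using reg by auto
      then have "g t - g s = gam t - gam s" unfolding g_def using cl_in[of s] cl_in[of t] st by auto
      moreover have "(1/(t-s)) *\<^sub>R (gam t - gam s) \<in> Q2"
      proof -
        have "(1/(t-s)) *\<^sub>R (gam t - gam s) \<in> closure (convex hull (\<rho> ` slopes f))"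
          by (rule gam_slope[OF in1(1) st in1(2)])
        moreover have "closure (convex hull (\<rho> ` slopes f)) \<subseteq> Q2"
          unfolding Q2_def Kc_def by (intro closure_mono hull_mono) (use closure_subset in blast)
        ultimately show ?thesis by blast
      qed
      moreover have "norm ((1/(t-s)) *\<^sub>R (gam t - gam s)) \<le> 1"
        using gam_lip[OF in1(1) less_imp_le[OF st] in1(2)] st by (simp add: divide_le_eq)
      ultimately show ?thesis unfolding Q_def by simp
    qed
  qed
  have Lg: "norm (g s - g t) \<le> 1 * \<bar>s - t\<bar>" for s t
  proof -
    have *: "norm (g t - g s) \<le> t - s" if "s < t" for s t
    proof -
      have "norm ((1/(t-s)) *\<^sub>R (g t - g s)) \<le> 1" using slopeQ[OF that] unfolding Q_def by simp
      then show ?thesis using that by (simp add: divide_le_eq)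
    qed
    show ?thesis
      using *[of s t] *[of t s] by (cases s t rule: linorder_cases) (auto simp: norm_minus_commute)
  qed
  have slg: "slopes g \<subseteq> Q2"
  proof
    fix y assume "y \<in> slopes g"
    then obtain s t where st: "s \<noteq> t" "y = (g s - g t) /\<^sub>R (s - t)" unfolding slopes_def by blast
    show "y \<in> Q2"
    proof (cases "s < t")
      case True
      then show ?thesis using slopeQ[OF True] st(2) slope_sym[where g=g and s=s and t=t] unfolding Q_def by simp
    next
      case False
      then have "t < s" using st(1) by simp
      then show ?thesis using slopeQ[of t s] st(2) unfolding Q_def by (simp add: inverse_eq_divide)
    qed
  qed
  have cg: "compact (closure (slopes g))"
  proof -
    have "closure (slopes g) \<subseteq> Q2" using slg by (rule closure_minimal) (use cQ2 compact_imp_closed in auto)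
    then have "closure (slopes g) = Q2 \<inter> closure (slopes g)" by blast
    then show ?thesis using compact_Int_closed[OF cQ2 closed_closure] by metis
  qed
  have gLip0: "g \<in> Lip0K"
    unfolding Lip0K_def Lip0_def
  proof (intro CollectI conjI exI)
    show "lipschitz_on 1 UNIV g" by (rule lipschitz_onI) (use Lg in \<open>auto simp: dist_norm\<close>)
  qed (use g0 cg in auto)
  define w where "w = \<rho> (F t0)"
  have t0in: "- real R < t0" "t0 < real R" using t by auto
  have dgam: "(gam has_vector_derivative w) (at t0)" unfolding w_def by (rule gam_deriv[OF t0G t0in Lt])
  have dg: "(g has_vector_derivative w) (at t0)"
  proof (rule has_vector_derivative_transform_within_open[of "\<lambda>y. gam y - gam 0" _ _ "{- real R<..<real R}"])
    show "((\<lambda>y. gam y - gam 0) has_vector_derivative w) (at t0)"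
      using has_vector_derivative_diff[OF dgam has_vector_derivative_const[of "gam 0"]] by simp
    show "t0 \<in> {- real R<..<real R}" using t0in by simp
    fix y assume "y \<in> {- real R<..<real R}"
    then have "cl y = y" by (intro cl_in) auto
    then show "gam y - gam 0 = g y" unfolding g_def by simp
  qed simp
  have lg1: "lip_norm g = 1"
  proof (rule antisym)
    show "lip_norm g \<le> 1" by (rule lip_norm_le[OF Lg])
    show "1 \<le> lip_norm g" using lip_norm_deriv[OF Lg dg] n1 unfolding w_def by simp
  qed
  have Lfg: "norm ((f s - g s) - (f t - g t)) \<le> \<kappa> * \<bar>s - t\<bar>" for s t
  proof -
    have e: "f x - g x = f (cl x) - gam (cl x) + gam 0" for x unfolding g_def by simp
    have k0: "0 \<le> \<kappa>"
    proof -
      have "norm (0 - \<rho> 0) \<le> \<kappa>" by (rule rho_close) simp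
      then show ?thesis using norm_ge_zero[of "0 - \<rho> 0"] by linarith
    qed
    have *: "norm ((f (cl s) - gam (cl s)) - (f (cl t) - gam (cl t))) \<le> \<kappa> * \<bar>cl s - cl t\<bar>" for s t
    proof (cases "cl s \<le> cl t")
      case True
      have "norm ((f (cl t) - f (cl s)) - (gam (cl t) - gam (cl s))) \<le> \<kappa> * (cl t - cl s)"
        by (rule gam_f[OF cl_rng(1) True cl_rng(2)])
      then show ?thesis using True
        by (metis (no_types, lifting) abs_of_nonpos diff_le_0_iff_le minus_diff_eq norm_minus_cancel abs_minus_commute abs_of_nonneg diff_ge_0_iff_ge diff_diff_eq2 add_diff_eq diff_add_eq)
    next
      case False
      have "norm ((f (cl s) - f (cl t)) - (gam (cl s) - gam (cl t))) \<le> \<kappa> * (cl s - cl t)"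
        by (rule gam_f[OF cl_rng(1)]) (use False cl_rng in auto)
      then show ?thesis using False by (simp add: algebra_simps)
    qed
    have "norm ((f s - g s) - (f t - g t)) = norm ((f (cl s) - gam (cl s)) - (f (cl t) - gam (cl t)))"
      unfolding e by (simp add: algebra_simps)
    also have "\<dots> \<le> \<kappa> * \<bar>cl s - cl t\<bar>" by (rule *)
    also have "\<dots> \<le> \<kappa> * \<bar>s - t\<bar>" by (rule mult_left_mono[OF cl_lip k0])
    finally show ?thesis .
  qed
  have "lip_norm (\<lambda>x. f x - g x) \<le> \<kappa>" by (rule lip_norm_le) (use Lfg in simp)
  then have "lip_norm (\<lambda>x. f x - g x) < \<epsilon>" using ke by linarith
  then show ?thesis using gLip0 lg1 dg n1 t(3) unfolding w_def by blast
qed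

end

theorem proposition4p8:
  fixes \<epsilon> :: real and f :: "real \<Rightarrow> 'a::banach" and t1 t2 :: real
  assumes "\<epsilon> > 0"
    and "f \<in> Lip0K" and "lip_norm f = 1"
    and "t1 < t2"
    and "norm (f t1 - f t2) / \<bar>t1 - t2\<bar> > 1 - \<epsilon>"
  shows "\<exists>g \<in> Lip0K. lip_norm g = 1 \<and>
           (\<exists>t0 \<in> {t1..t2}. \<exists>v. (g has_vector_derivative v) (at t0) \<and> norm v = 1) \<and>
           lip_norm (\<lambda>x. f x - g x) < \<epsilon>"
proof -
  from assms(2) have fL0: "f \<in> Lip0" and Kc: "compact (closure (slopes f))" by (auto simp: Lip0K_def)
  then obtain L where L0: "L \<ge> 0" "lipschitz_on L UNIV f" and f0: "f 0 = 0" by (auto simp: Lip0_def)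
  have Lf: "norm (f s - f t) \<le> L * \<bar>s - t\<bar>" for s t
    using lipschitz_onD[OF L0(2), of s t] by (simp add: dist_norm dist_real_def)
  have L1: "norm (f s - f t) \<le> \<bar>s - t\<bar>" for s t
  proof (cases "s = t")
    case False
    have "norm (f s - f t) / \<bar>s - t\<bar> \<le> lip_norm f" by (rule lip_norm_upper[OF Lf False])
    then show ?thesis using assms(3) False by (simp add: divide_le_eq)
  qed simp
  define R where "R = nat \<lceil>max \<bar>t1\<bar> \<bar>t2\<bar>\<rceil> + 1"
  have Rpos: "R > 0" unfolding R_def by simp
  have Rge: "real R \<ge> max \<bar>t1\<bar> \<bar>t2\<bar> + 1"
  proof -
    have m0: "0 \<le> \<lceil>max \<bar>t1\<bar> \<bar>t2\<bar>\<rceil>" by simp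
    have "real_of_int \<lceil>max \<bar>t1\<bar> \<bar>t2\<bar>\<rceil> \<ge> max \<bar>t1\<bar> \<bar>t2\<bar>" by (rule le_of_int_ceiling)
    moreover have "real (nat \<lceil>max \<bar>t1\<bar> \<bar>t2\<bar>\<rceil>) = real_of_int \<lceil>max \<bar>t1\<bar> \<bar>t2\<bar>\<rceil>"
      using m0 by (rule of_nat_nat)
    ultimately have "real (nat \<lceil>max \<bar>t1\<bar> \<bar>t2\<bar>\<rceil>) \<ge> max \<bar>t1\<bar> \<bar>t2\<bar>" by simp
    then show ?thesis unfolding R_def by simp
  qed
  have Rt: "- real R < t1" "t2 < real R" using Rge by auto
  obtain ns where ns: "strict_mono ns" "\<And>k p. Dl f R (ns k) p \<le> (1/8)^k"
    using subseq_exists[OF L1 Rpos Kc] by blast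
  interpret A: approx f R ns
    by unfold_locales (use L1 Rpos Kc ns in auto)
  define s0 where "s0 = norm (f t1 - f t2) / \<bar>t1 - t2\<bar>"
  have s0: "s0 > 1 - \<epsilon>" using assms(5) by (simp add: s0_def)
  have s01: "s0 \<le> 1" using L1[of t1 t2] assms(4) by (simp add: s0_def divide_le_eq)
  have rng: "- real R \<le> t1" "t1 \<le> t2" "t2 \<le> real R" using Rt assms(4) by auto
  define Sb where "Sb \<beta> = {x \<in> {t1..t2} \<inter> A.G0. \<beta> \<le> norm (A.F x)}" for \<beta>
  show ?thesis
  proof (cases "\<exists>\<beta>. max 0 (1-\<epsilon>) < \<beta> \<and> \<beta> < 1 \<and> \<not> negligible (Sb \<beta>)")
    case True
    then obtain \<beta> where \<beta>: "max 0 (1-\<epsilon>) < \<beta>" "\<beta> < 1" "\<not> negligible (Sb \<beta>)" by blast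
    have b0: "\<beta> > 0" using \<beta>(1) by simp
    define \<rho> where "\<rho> v = (min (1/\<beta>) (1/norm v)) *\<^sub>R v" for v :: 'a
    have rn0: "norm (\<rho> v) \<le> (1/\<beta>) * norm v" for v
    proof -
      have "norm (\<rho> v) = min (1/\<beta>) (1/norm v) * norm v" using b0 by (simp add: \<rho>_def)
      also have "\<dots> \<le> (1/\<beta>) * norm v" by (rule mult_right_mono) auto
      finally show ?thesis .
    qed
    have rc: "isCont \<rho> y" for y
    proof (cases "y = 0")
      case True
      have "\<rho> 0 = 0" by (simp add: \<rho>_def)
      moreover have "(\<rho> \<longlongrightarrow> 0) (at 0)"
      proof (rule Lim_null_comparison[OF always_eventually[OF allI[OF rn0]]])
        show "((\<lambda>v. (1/\<beta>) * norm v) \<longlongrightarrow> 0) (at (0::'a))"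
          using tendsto_mult_right_zero[OF tendsto_norm_zero[OF tendsto_ident_at], of "1/\<beta>"] by simp
      qed
      ultimately show ?thesis using True by (simp add: isCont_def)
    next
      case False
      then show ?thesis unfolding \<rho>_def by (intro continuous_intros) auto
    qed
    have rn: "norm (\<rho> v) \<le> 1" for v
    proof (cases "v = 0")
      case False
      have "norm (\<rho> v) = min (1/\<beta>) (1/norm v) * norm v" using b0 by (simp add: \<rho>_def)
      also have "\<dots> \<le> (1/norm v) * norm v" by (rule mult_right_mono) auto
      also have "\<dots> = 1" using False by simp
      finally show ?thesis .
    qed (simp add: \<rho>_def)
    have rcl: "norm (v - \<rho> v) \<le> 1 - \<beta>" if v: "norm v \<le> 1" for v
    proof (cases "v = 0")
      case True then show ?thesis using \<beta> by (simp add: \<rho>_def)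
    next
      case False
      define m where "m = min (1/\<beta>) (1/norm v)"
      have nv: "norm v > 0" using False by simp
      have m1: "m \<ge> 1" unfolding m_def using b0 \<beta>(2) v nv by (auto simp: field_simps)
      have "v - \<rho> v = (1 - m) *\<^sub>R v" by (simp add: \<rho>_def m_def algebra_simps)
      then have "norm (v - \<rho> v) = (m - 1) * norm v" using m1 by simp
      also have "\<dots> \<le> 1 - \<beta>"
      proof (cases "norm v \<le> \<beta>")
        case True
        have "m \<le> 1/\<beta>" unfolding m_def by simp
        then have "(m - 1) * norm v \<le> (1/\<beta> - 1) * \<beta>"
          using True m1 nv by (intro mult_mono) auto
        also have "\<dots> = 1 - \<beta>" using b0 by (simp add: field_simps)
        finally show ?thesis .
      next
        case False
        then have "m = 1/norm v" unfolding m_def using b0 nv by (simp add: min_def field_simps)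
        then have "(m - 1) * norm v = 1 - norm v" using nv by (simp add: field_simps)
        then show ?thesis using False by simp
      qed
      finally show ?thesis .
    qed
    interpret B: approx_rho f R ns \<rho> "1 - \<beta>"
      by unfold_locales (use rc rn rcl in auto)
    obtain N where N: "negligible N" "\<And>t0. t0 \<in> A.G0 - N \<Longrightarrow> B.Leb t0" using B.Nall_exists by blast
    have "\<not> Sb \<beta> \<subseteq> N" using \<beta>(3) N(1) negligible_subset by blast
    then obtain t0 where t0: "t0 \<in> Sb \<beta>" "t0 \<notin> N" by blast
    have t0G: "t0 \<in> A.G0" and t0I: "t0 \<in> {t1..t2}" and Fb: "\<beta> \<le> norm (A.F t0)"
      using t0 by (auto simp: Sb_def)
    have n1: "norm (\<rho> (A.F t0)) = 1"
    proof -
      have nv: "norm (A.F t0) > 0" using Fb b0 by linarith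
      have "1/norm (A.F t0) \<le> 1/\<beta>" using Fb b0 by (simp add: frac_le)
      then have "min (1/\<beta>) (1/norm (A.F t0)) = 1/norm (A.F t0)" by simp
      then show ?thesis using nv by (simp add: \<rho>_def)
    qed
    have ke: "1 - \<beta> < \<epsilon>" using \<beta>(1) by simp
    show ?thesis
      by (rule B.final_construct[OF f0 Rt t0I t0G N(2) n1 ke]) (use t0G t0 in auto)
  next
    case False
    then have negall: "\<And>\<beta>. max 0 (1-\<epsilon>) < \<beta> \<Longrightarrow> \<beta> < 1 \<Longrightarrow> negligible (Sb \<beta>)" by blast
    note ff = A.f_F_bound[OF rng]
    have e1: "\<epsilon> > 1"
    proof (rule ccontr)
      assume ne: "\<not> \<epsilon> > 1"
      define \<beta> where "\<beta> = (1 - \<epsilon> + s0)/2"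
      have b: "max 0 (1-\<epsilon>) < \<beta>" "\<beta> < 1" "\<beta> < s0" using ne s0 s01 unfolding \<beta>_def by auto
      have ng: "negligible (Sb \<beta>)" by (rule negall[OF b(1,2)])
      define Z where "Z = Sb \<beta> \<union> ({- real R..real R} - A.G0)"
      have nZ: "negligible Z" unfolding Z_def using ng A.G0_negl by (rule negligible_Un)
      define h where "h x = (if x \<in> Z then 0 else norm (A.F x))" for x
      have hint: "h integrable_on {t1..t2}"
        by (rule integrable_spike[OF ff(1) nZ]) (simp add: h_def)
      have "integral {t1..t2} (\<lambda>x. norm (A.F x)) = integral {t1..t2} h"
        by (rule integral_spike[OF nZ]) (simp add: h_def)
      also have "\<dots> \<le> integral {t1..t2} (\<lambda>x. \<beta>)"
      proof (rule integral_le[OF hint integrable_const_ivl])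
        fix x assume x: "x \<in> {t1..t2}"
        show "h x \<le> \<beta>"
        proof (cases "x \<in> Z")
          case True then show ?thesis using b by (simp add: h_def)
        next
          case False
          then have "x \<in> A.G0" using x rng unfolding Z_def by auto
          then have "\<not> \<beta> \<le> norm (A.F x)" using False x unfolding Z_def Sb_def by auto
          then show ?thesis using False by (simp add: h_def)
        qed
      qed
      also have "\<dots> = \<beta> * (t2 - t1)" using rng by simp
      finally have "norm (f t2 - f t1) \<le> \<beta> * (t2 - t1)" using ff(2) by linarith
      moreover have "norm (f t2 - f t1) = s0 * (t2 - t1)"
        unfolding s0_def using assms(4) by (simp add: norm_minus_commute)
      ultimately have "s0 * (t2 - t1) \<le> \<beta> * (t2 - t1)" by simp
      then have "s0 \<le> \<beta>" using assms(4) by simp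
      then show False using b(3) by simp
    qed
    have negZ: "negligible {x \<in> {t1..t2} \<inter> A.G0. A.F x \<noteq> 0}"
    proof -
      have "{x \<in> {t1..t2} \<inter> A.G0. A.F x \<noteq> 0} \<subseteq> (\<Union>n. Sb (1/Suc (Suc n)))"
      proof
        fix x assume x: "x \<in> {x \<in> {t1..t2} \<inter> A.G0. A.F x \<noteq> 0}"
        then have "norm (A.F x) > 0" by simp
        then obtain n where n: "1 / real (Suc n) < norm (A.F x)" by (metis nat_approx_posE)
        have "1 / real (Suc (Suc n)) \<le> 1 / real (Suc n)" by (simp add: frac_le)
        then have "x \<in> Sb (1/Suc (Suc n))" using x n unfolding Sb_def by auto
        then show "x \<in> (\<Union>n. Sb (1/Suc (Suc n)))" by blast
      qed
      moreover have "negligible (\<Union>n. Sb (1/Suc (Suc n)))"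
      proof (rule negligible_Union_nat)
        fix n
        show "negligible (Sb (1/Suc (Suc n)))"
          by (rule negall) (use e1 in \<open>auto simp: field_simps\<close>)
      qed
      ultimately show ?thesis by (rule negligible_subset[rotated])
    qed
    obtain a b where ab: "f a \<noteq> f b"
    proof (rule ccontr)
      assume "\<not> thesis"
      then have "\<And>a b. f a = f b" using that by blast
      then have "lip_norm f \<le> 0" by (intro lip_norm_le) simp
      then show False using assms(3) by simp
    qed
    define u where "u = (1/norm (f a - f b)) *\<^sub>R (f a - f b)"
    have nu: "norm u = 1" using ab by (simp add: u_def)
    define cl where "cl v = (min 1 (1/norm v)) *\<^sub>R v" for v :: 'a
    have cln0: "norm (cl v) \<le> norm v" for v by (simp add: cl_def mult_left_le_one_le)
    have cln: "norm (cl v) \<le> 1" for v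
    proof (cases "v = 0")
      case False
      have "norm (cl v) = min 1 (1/norm v) * norm v" by (simp add: cl_def)
      also have "\<dots> \<le> (1/norm v) * norm v" by (rule mult_right_mono) auto
      also have "\<dots> = 1" using False by simp
      finally show ?thesis .
    qed (simp add: cl_def)
    have clid: "norm v \<le> 1 \<Longrightarrow> cl v = v" for v
    proof (cases "v = 0")
      case False
      assume "norm v \<le> 1"
      then have "1 \<le> 1/norm v" using False by (simp add: field_simps)
      then show ?thesis by (simp add: cl_def)
    qed (simp add: cl_def)
    have clc: "isCont cl y" for y
    proof (cases "y = 0")
      case True
      have "cl 0 = 0" by (simp add: cl_def)
      moreover have "(cl \<longlongrightarrow> 0) (at 0)"
      proof (rule Lim_null_comparison[OF always_eventually[OF allI[OF cln0]]])
        show "((\<lambda>v. norm v) \<longlongrightarrow> 0) (at (0::'a))"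
          by (rule tendsto_norm_zero[OF tendsto_ident_at])
      qed
      ultimately show ?thesis using True by (simp add: isCont_def)
    next
      case False
      then show ?thesis unfolding cl_def by (intro continuous_intros) auto
    qed
    define \<rho> where "\<rho> v = cl v + (1 - norm (cl v)) *\<^sub>R u" for v
    have rc: "isCont \<rho> y" for y unfolding \<rho>_def by (intro continuous_intros clc)
    have rn: "norm (\<rho> v) \<le> 1" for v
    proof -
      have "norm (\<rho> v) \<le> norm (cl v) + norm ((1 - norm (cl v)) *\<^sub>R u)"
        unfolding \<rho>_def by (rule norm_triangle_ineq)
      also have "\<dots> = norm (cl v) + (1 - norm (cl v))" using cln[of v] nu by simp
      finally show ?thesis by simp
    qed
    have rcl: "norm (v - \<rho> v) \<le> 1" if v: "norm v \<le> 1" for v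
    proof -
      have "v - \<rho> v = - ((1 - norm v) *\<^sub>R u)" unfolding \<rho>_def clid[OF v] by simp
      then have "norm (v - \<rho> v) = 1 - norm v" using nu v by simp
      then show ?thesis by simp
    qed
    interpret B: approx_rho f R ns \<rho> 1
      by unfold_locales (use rc rn rcl in auto)
    obtain N where N: "negligible N" "\<And>t0. t0 \<in> A.G0 - N \<Longrightarrow> B.Leb t0" using B.Nall_exists by blast
    have nI: "\<not> negligible {t1..t2}"
      using negligible_interval(1)[of t1 t2] assms(4) by (simp add: box_real)
    have negW: "negligible (({- real R..real R} - A.G0) \<union> {x \<in> {t1..t2} \<inter> A.G0. A.F x \<noteq> 0} \<union> N)"
      using A.G0_negl negZ N(1) by (intro negligible_Un)
    have "\<not> {t1..t2} \<subseteq> ({- real R..real R} - A.G0) \<union> {x \<in> {t1..t2} \<inter> A.G0. A.F x \<noteq> 0} \<union> N"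
      using nI negW negligible_subset by blast
    then obtain t0 where t0I: "t0 \<in> {t1..t2}" and t0n: "t0 \<notin> ({- real R..real R} - A.G0) \<union> {x \<in> {t1..t2} \<inter> A.G0. A.F x \<noteq> 0} \<union> N"
      by blast
    have t0G: "t0 \<in> A.G0" using t0I t0n rng by auto
    have F0: "A.F t0 = 0" using t0I t0n t0G by auto
    have n1: "norm (\<rho> (A.F t0)) = 1" unfolding F0 \<rho>_def using nu by (simp add: cl_def)
    show ?thesis
      by (rule B.final_construct[OF f0 Rt t0I t0G N(2) n1]) (use t0G t0n e1 in auto)
  qed
qed

end
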